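(* Let $\Sigma$ be an alphabet and $L\subseteq\Sigma^*$. There exists an MPDA $\mathcal A$ with input alphabet $\Sigma$ and $L(\mathcal A)=L$ if and only if $L$ is context-free and every string in $L$ has length at least $2$.
   Context: A Moore push-down automaton (MPDA) is $\mathcal A=(Q,\Sigma,\Gamma,\delta,\tau,I,F)$ with finite sets of states $Q$, input symbols $\Sigma$, stack symbols $\Gamma$, transitions $\delta\subseteq(Q\times\Gamma^{\le1}\times\Gamma^{\le1}\times Q)\setminus(Q\times\Gamma\times\Gamma\times Q)$ (where $\Gamma^{\le1}=\{\varepsilon\}\cup\Gamma$; so a transition pops one symbol, pushes one symbol, or ignores the stack), output function $\tau:Q\to\Sigma$, and initial/final states $I,F\subseteq Q$. Configurations are pairs $\langle q,\alpha\rangle\in Q\times\Gamma^*$ (top of stack leftmost). Moves: $\langle q,\gamma\alpha\rangle\vdash\langle q',\gamma'\alpha\rangle$ for $(q,\gamma,\gamma',q')\in\delta$, $\alpha\in\Gamma^*$, provided $\gamma\alpha\neq\varepsilon$. A configuration is initial if $q\in I$ and $\alpha\in\Gamma$ (exactly one stack symbol), final if $q\in F$ and $\alpha=\varepsilon$. An accepting run is a sequence $\langle q_0,\alpha_0\rangle,\dots,\langle q_n,\alpha_n\rangle$ of configurations related successively by moves, starting in an initial and ending in a final configuration. $L(\mathcal A)$ is the set of strings $\tau(q_0)\cdots\tau(q_n)$ over all accepting runs. *)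

theory Defs
  imports Main
begin

text \<open>States and stack symbols are natural numbers (any finite set embeds into nat).
  An element of Gamma^{<=1} is an option: None = epsilon, Some g = g.\<close>

record 'a mpda =
  states :: "nat set"
  stack_syms :: "nat set"
  delta :: "(nat \<times> nat option \<times> nat option \<times> nat) set"
  out :: "nat \<Rightarrow> 'a"
  init :: "nat set"
  fin :: "nat set"

definition opt_list :: "nat option \<Rightarrow> nat list" where
  "opt_list x = (case x of None \<Rightarrow> [] | Some g \<Rightarrow> [g])"

definition wf_mpda :: "'a set \<Rightarrow> 'a mpda \<Rightarrow> bool" where
  "wf_mpda Sig A \<longleftrightarrow>
     finite (states A) \<and> finite (stack_syms A) \<and>
     (\<forall>(q, g, g', q') \<in> delta A. q \<in> states A \<and> q' \<in> states A \<and>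
        set_option g \<subseteq> stack_syms A \<and> set_option g' \<subseteq> stack_syms A \<and>
        \<not> (g \<noteq> None \<and> g' \<noteq> None)) \<and>
     (\<forall>q \<in> states A. out A q \<in> Sig) \<and>
     init A \<subseteq> states A \<and> fin A \<subseteq> states A"

type_synonym config = "nat \<times> nat list"

definition mpda_move :: "'a mpda \<Rightarrow> config \<Rightarrow> config \<Rightarrow> bool" where
  "mpda_move A c c' \<longleftrightarrow>
     (\<exists>q g g' q' alpha. (q, g, g', q') \<in> delta A \<and>
        c = (q, opt_list g @ alpha) \<and> c' = (q', opt_list g' @ alpha) \<and>
        opt_list g @ alpha \<noteq> [])"

definition initial_config :: "'a mpda \<Rightarrow> config \<Rightarrow> bool" where
  "initial_config A c \<longleftrightarrow> fst c \<in> init A \<and> (\<exists>g \<in> stack_syms A. snd c = [g])"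

definition final_config :: "'a mpda \<Rightarrow> config \<Rightarrow> bool" where
  "final_config A c \<longleftrightarrow> fst c \<in> fin A \<and> snd c = []"

definition accepting_run :: "'a mpda \<Rightarrow> config list \<Rightarrow> bool" where
  "accepting_run A cs \<longleftrightarrow> cs \<noteq> [] \<and> initial_config A (hd cs) \<and> final_config A (last cs) \<and>
     (\<forall>i. Suc i < length cs \<longrightarrow> mpda_move A (cs ! i) (cs ! Suc i))"

definition mpda_lang :: "'a mpda \<Rightarrow> 'a list set" where
  "mpda_lang A = {map (out A \<circ> fst) cs | cs. accepting_run A cs}"

text \<open>Nonterminals are natural numbers; a symbol is Inl (nonterminal) or Inr (terminal).\<close>

type_synonym 'a sym = "nat + 'a"

record 'a cfg =
  nonterms :: "nat set"
  prods :: "(nat \<times> 'a sym list) set"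
  start :: nat

definition wf_cfg :: "'a set \<Rightarrow> 'a cfg \<Rightarrow> bool" where
  "wf_cfg Sig G \<longleftrightarrow> finite (nonterms G) \<and> finite (prods G) \<and> start G \<in> nonterms G \<and>
     (\<forall>(X, rhs) \<in> prods G. X \<in> nonterms G \<and>
        (\<forall>s \<in> set rhs. case s of Inl Y \<Rightarrow> Y \<in> nonterms G | Inr a \<Rightarrow> a \<in> Sig))"

definition derive1 :: "'a cfg \<Rightarrow> 'a sym list \<Rightarrow> 'a sym list \<Rightarrow> bool" where
  "derive1 G u v \<longleftrightarrow> (\<exists>x y X rhs. (X, rhs) \<in> prods G \<and> u = x @ [Inl X] @ y \<and> v = x @ rhs @ y)"

definition cfg_lang :: "'a cfg \<Rightarrow> 'a list set" where
  "cfg_lang G = {w. (derive1 G)\<^sup>*\<^sup>* [Inl (start G)] (map Inr w)}"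

definition context_free :: "'a set \<Rightarrow> 'a list set \<Rightarrow> bool" where
  "context_free Sig L \<longleftrightarrow> (\<exists>G. wf_cfg Sig G \<and> cfg_lang G = L)"

end

theory Submission
  imports Defs "HOL-Library.Nat_Bijection"
begin


inductive gsym :: "(nat \<times> 'a sym list) set \<Rightarrow> 'a sym \<Rightarrow> 'a list \<Rightarrow> bool" for P where
  gterm: "gsym P (Inr a) [a]"
| gnt: "(X, rhs) \<in> P \<Longrightarrow> list_all2 (gsym P) rhs ws \<Longrightarrow> gsym P (Inl X) (concat ws)"

definition gseq :: "(nat \<times> 'a sym list) set \<Rightarrow> 'a sym list \<Rightarrow> 'a list \<Rightarrow> bool" where
  "gseq P ss w \<longleftrightarrow> (\<exists>ws. w = concat ws \<and> list_all2 (gsym P) ss ws)"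

lemma gseq_Nil[simp]: "gseq P [] w \<longleftrightarrow> w = []"
  by (auto simp: gseq_def)

lemma gseq_Cons: "gseq P (s#ss) w \<longleftrightarrow> (\<exists>v u. w = v@u \<and> gsym P s v \<and> gseq P ss u)"
proof
  assume "gseq P (s#ss) w"
  then show "\<exists>v u. w = v@u \<and> gsym P s v \<and> gseq P ss u"
    by (auto simp: gseq_def list_all2_Cons1) blast
next
  assume "\<exists>v u. w = v@u \<and> gsym P s v \<and> gseq P ss u"
  then obtain v ws where "w = v @ concat ws" "gsym P s v" "list_all2 (gsym P) ss ws"
    by (auto simp: gseq_def)
  then show "gseq P (s#ss) w" unfolding gseq_def
    by (intro exI[of _ "v#ws"]) auto
qed

lemma gseq_append: "gseq P (xs@ys) w \<longleftrightarrow> (\<exists>w1 w2. w = w1@w2 \<and> gseq P xs w1 \<and> gseq P ys w2)"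
proof (induction xs arbitrary: w)
  case Nil then show ?case by simp
next
  case (Cons x xs)
  show ?case
    unfolding append_Cons gseq_Cons Cons
    by (metis append.assoc)
qed

lemma gseq_single[simp]: "gseq P [s] w \<longleftrightarrow> gsym P s w"
  by (simp add: gseq_Cons)

lemma gsym_Inr[simp]: "gsym P (Inr a) w \<longleftrightarrow> w = [a]"
  by (auto elim: gsym.cases intro: gsym.intros)

lemma gsym_Inl: "gsym P (Inl X) w \<longleftrightarrow> (\<exists>rhs. (X,rhs) \<in> P \<and> gseq P rhs w)"
proof
  assume "gsym P (Inl X) w" then show "\<exists>rhs. (X,rhs) \<in> P \<and> gseq P rhs w"
    by (cases rule: gsym.cases) (auto simp: gseq_def)
qed (auto intro: gsym.intros simp: gseq_def)

lemma gseq_Cons_Inr[simp]: "gseq P (Inr a # ss) w \<longleftrightarrow> (\<exists>w'. w = a # w' \<and> gseq P ss w')"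
  by (auto simp: gseq_Cons)

lemma gseq_map_Inr: "gseq P (map Inr w) w"
  by (induction w) (auto simp: gseq_Cons)

lemma derive1_ctx: "derive1 G u v \<Longrightarrow> derive1 G (x@u@y) (x@v@y)"
  unfolding derive1_def by (metis append.assoc)

lemma derives_ctx: "(derive1 G)\<^sup>*\<^sup>* u v \<Longrightarrow> (derive1 G)\<^sup>*\<^sup>* (x@u@y) (x@v@y)"
  by (induction rule: rtranclp_induct) (auto intro: rtranclp.rtrancl_into_rtrancl derive1_ctx)

lemma derives_app: "(derive1 G)\<^sup>*\<^sup>* u u' \<Longrightarrow> (derive1 G)\<^sup>*\<^sup>* v v' \<Longrightarrow> (derive1 G)\<^sup>*\<^sup>* (u@v) (u'@v')"
proof -
  assume a: "(derive1 G)\<^sup>*\<^sup>* u u'" "(derive1 G)\<^sup>*\<^sup>* v v'"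
  have "(derive1 G)\<^sup>*\<^sup>* ([]@u@v) ([]@u'@v)" using derives_ctx[OF a(1)] .
  moreover have "(derive1 G)\<^sup>*\<^sup>* (u'@v@[]) (u'@v'@[])" using derives_ctx[OF a(2)] .
  ultimately show ?thesis by simp
qed

lemma gsym_derives: "gsym (prods G) s w \<Longrightarrow> (derive1 G)\<^sup>*\<^sup>* [s] (map Inr w)"
proof (induction rule: gsym.induct)
  case (gterm a) then show ?case by simp
next
  case (gnt X rhs ws)
  have "(derive1 G)\<^sup>*\<^sup>* rhs (map Inr (concat ws))"
    using gnt(2)
  proof (induction rule: list_all2_induct)
    case Nil then show ?case by simp
  next
    case (Cons x xs y ys)
    then show ?case using derives_app[of G "[x]" "map Inr y" xs "map Inr (concat ys)"] by simp
  qed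
  moreover have "derive1 G [Inl X] rhs" unfolding derive1_def using gnt(1)
    by (metis append.left_neutral append.right_neutral)
  ultimately show ?case by (meson converse_rtranclp_into_rtranclp)
qed

lemma derives_gseq: "(derive1 G)\<^sup>*\<^sup>* ss (map Inr w) \<Longrightarrow> gseq (prods G) ss w"
proof (induction rule: converse_rtranclp_induct)
  case base then show ?case by (rule gseq_map_Inr)
next
  case (step y z)
  then obtain x yy X rhs where p: "(X, rhs) \<in> prods G" "y = x @ [Inl X] @ yy" "z = x @ rhs @ yy"
    unfolding derive1_def by blast
  from step(3) p(3) obtain w1 w2 w3 where "w = w1@w2@w3" "gseq (prods G) x w1"
     "gseq (prods G) rhs w2" "gseq (prods G) yy w3"
    by (auto simp: gseq_append)
  have "gseq (prods G) [Inl X] w2" using \<open>gseq (prods G) rhs w2\<close> p(1) by (auto simp: gsym_Inl)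
  then have "gseq (prods G) ([Inl X] @ yy) (w2@w3)" using \<open>gseq (prods G) yy w3\<close> gseq_append by blast
  then show ?case using p \<open>gseq (prods G) x w1\<close> \<open>w = w1@w2@w3\<close> gseq_append by blast
qed

lemma cfg_lang_gsym: "cfg_lang G = {w. gsym (prods G) (Inl (start G)) w}"
  unfolding cfg_lang_def using gsym_derives derives_gseq gseq_single by fastforce



record ('q,'g,'a) gm =
  gQ :: "'q set"
  gG :: "'g set"
  gdelta :: "('q \<times> 'g option \<times> 'g option \<times> 'q) set"
  gout :: "'q \<Rightarrow> 'a"
  ginit :: "'q set"
  gfin :: "'q set"

definition gopt :: "'g option \<Rightarrow> 'g list" where
  "gopt x = (case x of None \<Rightarrow> [] | Some g \<Rightarrow> [g])"

lemma gopt_simps[simp]: "gopt None = []" "gopt (Some g) = [g]"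
  by (auto simp: gopt_def)

definition gmove :: "('q,'g,'a) gm \<Rightarrow> 'q \<times> 'g list \<Rightarrow> 'q \<times> 'g list \<Rightarrow> bool" where
  "gmove B c c' \<longleftrightarrow> (\<exists>q g g' q' al. (q,g,g',q') \<in> gdelta B \<and> c = (q, gopt g @ al) \<and>
      c' = (q', gopt g' @ al) \<and> gopt g @ al \<noteq> [])"

inductive grr :: "('q,'g,'a) gm \<Rightarrow> 'q \<times> 'g list \<Rightarrow> 'q \<times> 'g list \<Rightarrow> 'a list \<Rightarrow> bool" for B where
  grr_refl: "grr B c c []"
| grr_step: "gmove B c d \<Longrightarrow> grr B d e w \<Longrightarrow> grr B c e (gout B (fst d) # w)"

definition ginitial :: "('q,'g,'a) gm \<Rightarrow> 'q \<times> 'g list \<Rightarrow> bool" where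
  "ginitial B c \<longleftrightarrow> fst c \<in> ginit B \<and> (\<exists>g\<in>gG B. snd c = [g])"

definition gfinal :: "('q,'g,'a) gm \<Rightarrow> 'q \<times> 'g list \<Rightarrow> bool" where
  "gfinal B c \<longleftrightarrow> fst c \<in> gfin B \<and> snd c = []"

definition glang :: "('q,'g,'a) gm \<Rightarrow> 'a list set" where
  "glang B = {gout B (fst c) # w | c c' w. ginitial B c \<and> gfinal B c' \<and> grr B c c' w}"

definition toG :: "'a mpda \<Rightarrow> (nat, nat, 'a) gm" where
  "toG A = \<lparr>gQ = states A, gG = stack_syms A, gdelta = delta A, gout = out A, ginit = init A, gfin = fin A\<rparr>"

lemma opt_list_gopt: "opt_list = gopt"
  by (auto simp: fun_eq_iff opt_list_def gopt_def)

lemma move_toG: "mpda_move A = gmove (toG A)"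
  by (auto simp: fun_eq_iff mpda_move_def gmove_def toG_def opt_list_gopt)

definition chain :: "('c \<Rightarrow> 'c \<Rightarrow> bool) \<Rightarrow> 'c list \<Rightarrow> bool" where
  "chain R cs \<longleftrightarrow> (\<forall>i. Suc i < length cs \<longrightarrow> R (cs!i) (cs!Suc i))"

lemma chain_single[simp]: "chain R [c]" by (simp add: chain_def)

lemma chain_Cons2: "chain R (c # d # cs) \<longleftrightarrow> R c d \<and> chain R (d#cs)"
proof
  assume a: "chain R (c # d # cs)"
  have "R c d" using a[unfolded chain_def, rule_format, of 0] by simp
  moreover have "chain R (d#cs)" unfolding chain_def
  proof (intro allI impI)
    fix i assume "Suc i < length (d#cs)"
    then show "R ((d#cs)!i) ((d#cs)!Suc i)" using a[unfolded chain_def, rule_format, of "Suc i"] by simp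
  qed
  ultimately show "R c d \<and> chain R (d#cs)" ..
next
  assume a: "R c d \<and> chain R (d#cs)"
  show "chain R (c # d # cs)" unfolding chain_def
  proof (intro allI impI)
    fix i assume "Suc i < length (c#d#cs)"
    then show "R ((c#d#cs)!i) ((c#d#cs)!Suc i)"
      using a[unfolded chain_def] by (cases i) auto
  qed
qed

lemma chain_grr: "cs \<noteq> [] \<Longrightarrow> chain (gmove B) cs \<Longrightarrow> grr B (hd cs) (last cs) (map (gout B \<circ> fst) (tl cs))"
proof (induction cs)
  case Nil then show ?case by simp
next
  case (Cons c cs)
  show ?case
  proof (cases cs)
    case Nil then show ?thesis by (simp add: grr_refl)
  next
    case (Cons d ds)
    with Cons.prems have "gmove B c d" "chain (gmove B) (d#ds)" by (auto simp: chain_Cons2)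
    with Cons.IH Cons have "grr B d (last (d#ds)) (map (gout B \<circ> fst) ds)" by (simp del: last.simps add: comp_def)
    with \<open>gmove B c d\<close> have "grr B c (last (d#ds)) (gout B (fst d) # map (gout B \<circ> fst) ds)"
      by (rule grr_step)
    then show ?thesis using Cons by (simp add: comp_def)
  qed
qed

lemma grr_chain: "grr B c e w \<Longrightarrow> \<exists>cs. cs \<noteq> [] \<and> hd cs = c \<and> last cs = e \<and> chain (gmove B) cs \<and>
   map (gout B \<circ> fst) (tl cs) = w"
proof (induction rule: grr.induct)
  case (grr_refl c) then show ?case by (intro exI[of _ "[c]"]) auto
next
  case (grr_step c d e w)
  then obtain cs where cs: "cs \<noteq> []" "hd cs = d" "last cs = e" "chain (gmove B) cs" "map (gout B \<circ> fst) (tl cs) = w" by blast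
  then obtain ds where "cs = d # ds" by (cases cs) auto
  then show ?case using cs grr_step(1) by (intro exI[of _ "c#cs"]) (auto simp: chain_Cons2)
qed

lemma mpda_lang_glang: "mpda_lang A = glang (toG A)"
proof -
  have 1: "accepting_run A cs \<longleftrightarrow> cs \<noteq> [] \<and> ginitial (toG A) (hd cs) \<and> gfinal (toG A) (last cs) \<and> chain (gmove (toG A)) cs" for cs
    by (simp add: accepting_run_def chain_def move_toG ginitial_def gfinal_def initial_config_def final_config_def toG_def)
  show ?thesis
  proof (intro set_eqI iffI)
    fix x assume "x \<in> mpda_lang A"
    then obtain cs where cs: "accepting_run A cs" "x = map (out A \<circ> fst) cs" unfolding mpda_lang_def by blast
    then have c: "cs \<noteq> []" "ginitial (toG A) (hd cs)" "gfinal (toG A) (last cs)" "chain (gmove (toG A)) cs" using 1 by auto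
    have "grr (toG A) (hd cs) (last cs) (map (gout (toG A) \<circ> fst) (tl cs))" using chain_grr c by blast
    moreover have "x = gout (toG A) (fst (hd cs)) # map (gout (toG A) \<circ> fst) (tl cs)"
      using cs(2) c(1) by (cases cs) (auto simp: toG_def)
    ultimately show "x \<in> glang (toG A)" unfolding glang_def using c by blast
  next
    fix x assume "x \<in> glang (toG A)"
    then obtain c c' w where cc: "x = gout (toG A) (fst c) # w" "ginitial (toG A) c" "gfinal (toG A) c'" "grr (toG A) c c' w"
      unfolding glang_def by blast
    then obtain cs where cs: "cs \<noteq> []" "hd cs = c" "last cs = c'" "chain (gmove (toG A)) cs" "map (gout (toG A) \<circ> fst) (tl cs) = w"
      using grr_chain by blast
    then have "accepting_run A cs" using 1 cc by auto
    moreover have "x = map (out A \<circ> fst) cs" using cs cc(1) by (cases cs) (auto simp: toG_def)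
    ultimately show "x \<in> mpda_lang A" unfolding mpda_lang_def by blast
  qed
qed



lemma grr_trans: "grr B c d w1 \<Longrightarrow> grr B d e w2 \<Longrightarrow> grr B c e (w1@w2)"
  by (induction rule: grr.induct) (auto intro: grr.intros)

lemma grr_single: "gmove B c d \<Longrightarrow> grr B c d [gout B (fst d)]"
  by (auto intro: grr.intros)

lemma grr_Nil: "grr B c e [] \<Longrightarrow> c = e"
  by (erule grr.cases) auto

lemma gmove_ext: "gmove B (p, al) (q, be) \<Longrightarrow> gmove B (p, al@ga) (q, be@ga)"
  unfolding gmove_def by fastforce

lemma grr_ext: "grr B c e w \<Longrightarrow> grr B (fst c, snd c @ ga) (fst e, snd e @ ga) w"
proof (induction rule: grr.induct)
  case (grr_refl c) then show ?case by (rule grr.intros)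
next
  case (grr_step c d e w)
  have "gmove B (fst c, snd c @ ga) (fst d, snd d @ ga)" using gmove_ext[of B "fst c" "snd c" "fst d" "snd d" ga] grr_step(1) by simp
  then show ?case using grr_step(3) by (metis fst_conv grr.grr_step)
qed

lemma grr_empty: "grr B (p, []) e w \<Longrightarrow> e = (p,[]) \<and> w = []"
  by (erule grr.cases) (auto simp: gmove_def)

lemma grr_split_aux: "grr B c e w \<Longrightarrow> c = (p, al@ga) \<Longrightarrow> e = (q,[]) \<Longrightarrow> al \<noteq> [] \<Longrightarrow>
  \<exists>r w1 w2. grr B (p,al) (r,[]) w1 \<and> grr B (r,ga) (q,[]) w2 \<and> w = w1@w2"
proof (induction arbitrary: p al rule: grr.induct)
  case (grr_refl c) then show ?case by simp
next
  case (grr_step c d e w)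
  from grr_step(1) obtain qq g g' q' all where m: "(qq,g,g',q') \<in> gdelta B" "c = (qq, gopt g @ all)"
     "d = (q', gopt g' @ all)" "gopt g @ all \<noteq> []" unfolding gmove_def by blast
  have "\<exists>al1. al = gopt g @ al1 \<and> all = al1 @ ga"
  proof (cases g)
    case None then show ?thesis using m grr_step(4) by auto
  next
    case (Some x)
    then show ?thesis using m grr_step(4,6) by (cases al) auto
  qed
  then obtain al1 where al1: "al = gopt g @ al1" "all = al1 @ ga" by blast
  have mv: "gmove B (p, al) (q', gopt g' @ al1)" unfolding gmove_def
    using m grr_step(4,6) al1 by auto
  show ?case
  proof (cases "gopt g' @ al1 = []")
    case True
    then have "d = (q', ga)" using m al1 by simp
    have "grr B (p, al) (q', []) [gout B q']" using grr_single[OF mv] True by simp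
    moreover have "grr B (q', ga) (q, []) w" using grr_step(2) grr_step(5) \<open>d = (q', ga)\<close> by simp
    ultimately show ?thesis using \<open>d = (q', ga)\<close> by (intro exI[of _ q'] exI[of _ "[gout B q']"] exI[of _ w]) simp
  next
    case False
    have dd: "d = (q', (gopt g' @ al1) @ ga)" using m al1 by simp
    from grr_step(3)[OF dd grr_step(5) False] obtain r w1 w2 where
      "grr B (q', gopt g' @ al1) (r, []) w1" "grr B (r, ga) (q, []) w2" "w = w1 @ w2" by blast
    then show ?thesis using grr.grr_step[OF mv] dd
      by (intro exI[of _ r] exI[of _ "gout B q' # w1"] exI[of _ w2]) simp
  qed
qed

lemma grr_split: "grr B (p, al@ga) (q,[]) w \<Longrightarrow> al \<noteq> [] \<Longrightarrow>
  \<exists>r w1 w2. grr B (p,al) (r,[]) w1 \<and> grr B (r,ga) (q,[]) w2 \<and> w = w1@w2"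
  by (rule grr_split_aux[OF _ refl refl])

section \<open>Triple construction\<close>

definition T :: "nat \<Rightarrow> nat \<Rightarrow> nat \<Rightarrow> nat" where
  "T p X q = Suc (prod_encode (p, prod_encode (X, q)))"

lemma T_inj[simp]: "T p X q = T p' X' q' \<longleftrightarrow> p = p' \<and> X = X' \<and> q = q'"
  by (auto simp: T_def prod_encode_eq)

lemma T_ne0[simp]: "T p X q \<noteq> 0" by (simp add: T_def)

definition tprods :: "'a mpda \<Rightarrow> (nat \<times> 'a sym list) set" where
  "tprods A =
    {(0, [Inr (out A p), Inl (T p X q)]) | p X q. p \<in> init A \<and> X \<in> stack_syms A \<and> q \<in> fin A} \<union>
    {(T p X q, [Inr (out A q)]) | p X q. (p, Some X, None, q) \<in> delta A} \<union>
    {(T p X q, [Inr (out A p'), Inl (T p' X q)]) | p X q p'. (p, None, None, p') \<in> delta A \<and> X \<in> stack_syms A \<and> q \<in> states A} \<union>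
    {(T p X q, [Inr (out A p'), Inl (T p' Y r), Inl (T r X q)]) | p X q p' Y r.
        (p, None, Some Y, p') \<in> delta A \<and> X \<in> stack_syms A \<and> q \<in> states A \<and> r \<in> states A}"

definition tnts :: "'a mpda \<Rightarrow> nat set" where
  "tnts A = insert 0 ((\<lambda>(p,X,q). T p X q) ` (states A \<times> stack_syms A \<times> states A))"

lemma T_in_tnts: "p \<in> states A \<Longrightarrow> X \<in> stack_syms A \<Longrightarrow> q \<in> states A \<Longrightarrow> T p X q \<in> tnts A"
  unfolding tnts_def by force

lemma zero_in_tnts[simp]: "0 \<in> tnts A" unfolding tnts_def by simp

definition tgram :: "'a mpda \<Rightarrow> 'a cfg" where
  "tgram A = \<lparr>nonterms = tnts A, prods = tprods A, start = 0\<rparr>"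

lemma wf_trans: "wf_mpda Sig A \<Longrightarrow> (q,g,g',q') \<in> delta A \<Longrightarrow>
   q \<in> states A \<and> q' \<in> states A \<and> set_option g \<subseteq> stack_syms A \<and> set_option g' \<subseteq> stack_syms A \<and> (g = None \<or> g' = None)"
proof -
  assume a: "wf_mpda Sig A" "(q,g,g',q') \<in> delta A"
  have "\<forall>(q, g, g', q') \<in> delta A. q \<in> states A \<and> q' \<in> states A \<and>
        set_option g \<subseteq> stack_syms A \<and> set_option g' \<subseteq> stack_syms A \<and>
        \<not> (g \<noteq> None \<and> g' \<noteq> None)" using a(1) unfolding wf_mpda_def by blast
  from bspec[OF this a(2)] show ?thesis by auto
qed

lemma grr_state: "grr (toG A) c e w \<Longrightarrow> wf_mpda Sig A \<Longrightarrow> w \<noteq> [] \<Longrightarrow> fst e \<in> states A"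
proof (induction rule: grr.induct)
  case (grr_refl c) then show ?case by simp
next
  case (grr_step c d e w)
  show ?case
  proof (cases w)
    case Nil then have "d = e" using grr_step(2) grr_Nil by blast
    then show ?thesis using grr_step(1,4) wf_trans[OF grr_step(4)] by (auto simp: gmove_def toG_def)
  next
    case Cons then show ?thesis using grr_step by simp
  qed
qed

lemma tgram_complete:
  assumes wf: "wf_mpda Sig A"
  shows "length w = n \<Longrightarrow> grr (toG A) (p,[X]) (q,[]) w \<Longrightarrow> X \<in> stack_syms A \<Longrightarrow> gsym (tprods A) (Inl (T p X q)) w"
proof (induction n arbitrary: p X q w rule: less_induct)
  case (less n)
  from less.prems(2) obtain d w' where st: "gmove (toG A) (p,[X]) d" "grr (toG A) d (q,[]) w'" "w = out A (fst d) # w'"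
    by (cases rule: grr.cases) (auto simp: toG_def)
  from st(1) obtain g g' p' al where m: "(p,g,g',p') \<in> delta A" "[X] = gopt g @ al" "d = (p', gopt g' @ al)"
    unfolding gmove_def toG_def by auto
  have qQ: "q \<in> states A" using grr_state[OF less.prems(2) wf] st(3) by simp
  show ?case
  proof (cases g)
    case (Some x)
    then have "x = X" "al = []" using m(2) by auto
    moreover have "g' = None" using wf_trans[OF wf m(1)] Some by auto
    ultimately have "d = (p', [])" using m by simp
    then have "p' = q" "w' = []" using grr_empty[of "toG A" p' "(q,[])" w'] st(2) by auto
    then have "(T p X q, [Inr (out A q)]) \<in> tprods A" using m(1) Some \<open>x = X\<close> \<open>g' = None\<close> unfolding tprods_def by blast
    then show ?thesis using st(3) \<open>d = (p', [])\<close> \<open>w' = []\<close> \<open>p' = q\<close>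
      by (auto simp: gsym_Inl gseq_Cons)
  next
    case None
    then have al: "al = [X]" using m(2) by simp
    show ?thesis
    proof (cases g')
      case None
      then have dd: "d = (p', [X])" using m al \<open>g = None\<close> by simp
      have "gsym (tprods A) (Inl (T p' X q)) w'"
        using less.IH[of "length w'" w' p' X q] st(2,3) dd less.prems by auto
      moreover have "(T p X q, [Inr (out A p'), Inl (T p' X q)]) \<in> tprods A"
        using m(1) None \<open>g = None\<close> less.prems(3) qQ unfolding tprods_def by blast
      ultimately show ?thesis using st(3) dd unfolding gsym_Inl[of _ "T p X q"]
        by (intro exI[of _ "[Inr (out A p'), Inl (T p' X q)]"]) auto
    next
      case (Some Y)
      then have dd: "d = (p', [Y] @ [X])" using m al by simp
      then obtain r w1 w2 where sp: "grr (toG A) (p',[Y]) (r,[]) w1" "grr (toG A) (r,[X]) (q,[]) w2" "w' = w1@w2"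
        using grr_split[of "toG A" p' "[Y]" "[X]" q w'] st(2) dd by auto
      have w1ne: "w1 \<noteq> []" using grr_Nil sp(1) by blast
      have rQ: "r \<in> states A" using grr_state[OF sp(1) wf w1ne] by simp
      have YG: "Y \<in> stack_syms A" using wf_trans[OF wf m(1)] Some by auto
      have "gsym (tprods A) (Inl (T p' Y r)) w1"
        using less.IH[of "length w1" w1 p' Y r] sp st(3) less.prems YG by auto
      moreover have "gsym (tprods A) (Inl (T r X q)) w2"
        using less.IH[of "length w2" w2 r X q] sp st(3) less.prems w1ne by auto
      moreover have "(T p X q, [Inr (out A p'), Inl (T p' Y r), Inl (T r X q)]) \<in> tprods A"
        using m(1) Some \<open>g = None\<close> less.prems(3) qQ rQ unfolding tprods_def by blast
      ultimately show ?thesis using st(3) dd sp(3) unfolding gsym_Inl[of _ "T p X q"]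
        by (intro exI[of _ "[Inr (out A p'), Inl (T p' Y r), Inl (T r X q)]"]) (auto simp: gseq_Cons)
    qed
  qed
qed

lemma tgram_sound:
  assumes wf: "wf_mpda Sig A"
  shows "gsym (tprods A) s w \<Longrightarrow> s = Inl (T p X q) \<Longrightarrow> grr (toG A) (p,[X]) (q,[]) w"
proof (induction arbitrary: p X q rule: gsym.induct)
  case (gterm a) then show ?case by simp
next
  case (gnt N rhs ws)
  have N: "N = T p X q" using gnt by simp
  from gnt(1) N consider
      (P1) "rhs = [Inr (out A q)]" "(p, Some X, None, q) \<in> delta A"
    | (P2) p' where "rhs = [Inr (out A p'), Inl (T p' X q)]" "(p, None, None, p') \<in> delta A"
    | (P3) p' Y r where "rhs = [Inr (out A p'), Inl (T p' Y r), Inl (T r X q)]" "(p, None, Some Y, p') \<in> delta A"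
    unfolding tprods_def by auto
  then show ?case
  proof cases
    case P1
    then have "ws = [[out A q]]" using gnt(2) by (auto simp: list_all2_Cons1)
    moreover have "gmove (toG A) (p,[X]) (q,[])" unfolding gmove_def toG_def using P1
      by (intro exI[of _ p] exI[of _ "Some X"] exI[of _ None] exI[of _ q] exI[of _ "[]"]) auto
    ultimately show ?thesis using grr_single[of "toG A" "(p,[X])" "(q,[])"] by (simp add: toG_def)
  next
    case (P2 p')
    then obtain w' where ws: "ws = [[out A p'], w']" "grr (toG A) (p',[X]) (q,[]) w'"
      using gnt(2) by (auto simp: list_all2_Cons1)
    moreover have "gmove (toG A) (p,[X]) (p',[X])" unfolding gmove_def toG_def using P2
      by (intro exI[of _ p] exI[of _ None] exI[of _ None] exI[of _ p'] exI[of _ "[X]"]) auto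
    ultimately show ?thesis using grr.grr_step[of "toG A" "(p,[X])" "(p',[X])"] by (simp add: toG_def)
  next
    case (P3 p' Y r)
    then obtain w1 w2 where ws: "ws = [[out A p'], w1, w2]" "grr (toG A) (p',[Y]) (r,[]) w1" "grr (toG A) (r,[X]) (q,[]) w2"
      using gnt(2) by (auto simp: list_all2_Cons1)
    have "grr (toG A) (p',[Y,X]) (r,[X]) w1" using grr_ext[OF ws(2), of "[X]"] by simp
    then have "grr (toG A) (p',[Y,X]) (q,[]) (w1@w2)" using grr_trans ws(3) by blast
    moreover have "gmove (toG A) (p,[X]) (p',[Y,X])" unfolding gmove_def toG_def using P3
      by (intro exI[of _ p] exI[of _ None] exI[of _ "Some Y"] exI[of _ p'] exI[of _ "[X]"]) auto
    ultimately show ?thesis using grr.grr_step[of "toG A" "(p,[X])" "(p',[Y,X])"] ws(1) by (simp add: toG_def)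
  qed
qed

lemma tgram_lang:
  assumes wf: "wf_mpda Sig A"
  shows "cfg_lang (tgram A) = mpda_lang A"
proof -
  have "gsym (tprods A) (Inl 0) w \<longleftrightarrow> w \<in> glang (toG A)" for w
  proof
    assume "gsym (tprods A) (Inl 0) w"
    then obtain rhs where "(0, rhs) \<in> tprods A" "gseq (tprods A) rhs w" by (auto simp: gsym_Inl)
    then obtain p X q where r: "rhs = [Inr (out A p), Inl (T p X q)]" "p \<in> init A" "X \<in> stack_syms A" "q \<in> fin A"
      unfolding tprods_def by auto
    then obtain w' where "w = out A p # w'" "gsym (tprods A) (Inl (T p X q)) w'"
      using \<open>gseq _ rhs w\<close> by (auto simp: gseq_Cons)
    then show "w \<in> glang (toG A)" unfolding glang_def using tgram_sound[OF wf] r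
      by (intro CollectI exI[of _ "(p,[X])"] exI[of _ "(q,[])"] exI[of _ w'])
         (auto simp: toG_def ginitial_def gfinal_def)
  next
    assume "w \<in> glang (toG A)"
    then obtain c c' w' where cc: "w = out A (fst c) # w'" "ginitial (toG A) c" "gfinal (toG A) c'" "grr (toG A) c c' w'"
      unfolding glang_def by (auto simp: toG_def)
    then obtain p X q where pq: "c = (p,[X])" "c' = (q,[])" "p \<in> init A" "X \<in> stack_syms A" "q \<in> fin A"
      by (cases c, cases c') (auto simp: ginitial_def gfinal_def toG_def)
    have "gsym (tprods A) (Inl (T p X q)) w'" using tgram_complete[OF wf refl] cc pq by simp
    moreover have "(0, [Inr (out A p), Inl (T p X q)]) \<in> tprods A" using pq unfolding tprods_def by blast
    ultimately show "gsym (tprods A) (Inl 0) w" using cc(1) pq(1) unfolding gsym_Inl[of _ 0]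
      by (intro exI[of _ "[Inr (out A p), Inl (T p X q)]"]) auto
  qed
  then show ?thesis by (auto simp: cfg_lang_gsym tgram_def mpda_lang_glang)
qed

lemma glang_length: "w \<in> glang (toG A) \<Longrightarrow> 2 \<le> length w"
proof -
  assume "w \<in> glang (toG A)"
  then obtain c c' w' where cc: "w = out A (fst c) # w'" "ginitial (toG A) c" "gfinal (toG A) c'" "grr (toG A) c c' w'"
    unfolding glang_def by (auto simp: toG_def)
  have "c \<noteq> c'" using cc by (auto simp: ginitial_def gfinal_def)
  then have "w' \<noteq> []" using grr_Nil cc(4) by blast
  then show ?thesis using cc(1) by (cases w') auto
qed

lemma tgram_wf:
  assumes wf: "wf_mpda Sig A"
  shows "wf_cfg Sig (tgram A)"
proof -
  let ?S = "Inl ` tnts A \<union> Inr ` (out A ` states A)"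
  have fQ: "finite (states A)" "finite (stack_syms A)" using wf by (auto simp: wf_mpda_def)
  have fN: "finite (tnts A)" unfolding tnts_def using fQ by auto
  have outS: "out A ` states A \<subseteq> Sig" using wf by (auto simp: wf_mpda_def)
  have sub: "tprods A \<subseteq> tnts A \<times> {xs. set xs \<subseteq> ?S \<and> length xs \<le> 3}"
  proof
    fix x assume "x \<in> tprods A"
    have iq: "init A \<subseteq> states A" "fin A \<subseteq> states A" using wf by (auto simp: wf_mpda_def)
    from \<open>x \<in> tprods A\<close> consider
      (a) p X q where "x = (0, [Inr (out A p), Inl (T p X q)])" "p \<in> init A" "X \<in> stack_syms A" "q \<in> fin A"
    | (b) p X q where "x = (T p X q, [Inr (out A q)])" "(p, Some X, None, q) \<in> delta A"
    | (c) p X q p' where "x = (T p X q, [Inr (out A p'), Inl (T p' X q)])" "(p, None, None, p') \<in> delta A" "X \<in> stack_syms A" "q \<in> states A"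
    | (d) p X q p' Y r where "x = (T p X q, [Inr (out A p'), Inl (T p' Y r), Inl (T r X q)])"
        "(p, None, Some Y, p') \<in> delta A" "X \<in> stack_syms A" "q \<in> states A" "r \<in> states A"
      unfolding tprods_def by blast
    then show "x \<in> tnts A \<times> {xs. set xs \<subseteq> ?S \<and> length xs \<le> 3}"
    proof cases
      case a then show ?thesis using iq by (auto intro!: T_in_tnts)
    next
      case b then show ?thesis using wf_trans[OF wf b(2)] by (auto intro!: T_in_tnts)
    next
      case c then show ?thesis using wf_trans[OF wf c(2)] by (auto intro!: T_in_tnts)
    next
      case d then show ?thesis using wf_trans[OF wf d(2)] by (auto intro!: T_in_tnts)
    qed
  qed
  have "finite ?S" using fN fQ by auto
  then have "finite {xs. set xs \<subseteq> ?S \<and> length xs \<le> 3}" by (rule finite_lists_length_le)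
  then have "finite (tnts A \<times> {xs. set xs \<subseteq> ?S \<and> length xs \<le> 3})" using fN by blast
  then have "finite (tprods A)" using sub by (rule finite_subset[rotated])
  moreover have "\<forall>(X, rhs) \<in> tprods A. X \<in> tnts A \<and>
        (\<forall>s \<in> set rhs. case s of Inl Y \<Rightarrow> Y \<in> tnts A | Inr a \<Rightarrow> a \<in> Sig)"
  proof (intro ballI)
    fix pr assume "pr \<in> tprods A"
    then have "pr \<in> tnts A \<times> {xs. set xs \<subseteq> ?S \<and> length xs \<le> 3}" using sub by blast
    then show "case pr of (X, rhs) \<Rightarrow> X \<in> tnts A \<and> (\<forall>s \<in> set rhs. case s of Inl Y \<Rightarrow> Y \<in> tnts A | Inr a \<Rightarrow> a \<in> Sig)"
      using outS by (auto split: sum.splits)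
  qed
  moreover have e: "nonterms (tgram A) = tnts A" "prods (tgram A) = tprods A" "start (tgram A) = 0"
    by (simp_all add: tgram_def)
  ultimately show ?thesis unfolding wf_cfg_def e using fN by simp
qed

lemma dir1:
  assumes "wf_mpda Sig A"
  shows "context_free Sig (mpda_lang A) \<and> (\<forall>w \<in> mpda_lang A. 2 \<le> length w)"
  using tgram_wf[OF assms] tgram_lang[OF assms] glang_length mpda_lang_glang
  unfolding context_free_def by metis



section \<open>Epsilon elimination\<close>

inductive del :: "(nat \<times> 'a sym list) set \<Rightarrow> 'a sym list \<Rightarrow> 'a sym list \<Rightarrow> bool" for P where
  del_nil: "del P [] []"
| del_keep: "del P al al' \<Longrightarrow> del P (s#al) (s#al')"
| del_drop: "gsym P s [] \<Longrightarrow> del P al al' \<Longrightarrow> del P (s#al) al'"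

definition epsfree :: "(nat \<times> 'a sym list) set \<Rightarrow> (nat \<times> 'a sym list) set" where
  "epsfree P = {(X, al') | X al al'. (X, al) \<in> P \<and> del P al al' \<and> al' \<noteq> []}"

lemma del_props: "del P al al' \<Longrightarrow> length al' \<le> length al \<and> set al' \<subseteq> set al"
  by (induction rule: del.induct) auto

lemma eps_aux1: "list_all2 (\<lambda>s w. gsym P s w \<and> (w \<noteq> [] \<longrightarrow> gsym P' s w)) rhs ws \<Longrightarrow>
  \<exists>al' ws'. del P rhs al' \<and> list_all2 (gsym P') al' ws' \<and> concat ws' = concat ws"
proof (induction rule: list_all2_induct)
  case Nil then show ?case by (auto intro: del.intros)
next
  case (Cons s rhs w ws)
  then obtain al' ws' where ih: "del P rhs al'" "list_all2 (gsym P') al' ws'" "concat ws' = concat ws" by blast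
  show ?case
  proof (cases "w = []")
    case True
    then show ?thesis using ih Cons(1) by (intro exI[of _ al'] exI[of _ ws']) (auto intro: del.intros)
  next
    case False
    then show ?thesis using ih Cons(1) by (intro exI[of _ "s#al'"] exI[of _ "w#ws'"]) (auto intro: del.intros)
  qed
qed

lemma eps_complete: "gsym P s w \<Longrightarrow> w \<noteq> [] \<Longrightarrow> gsym (epsfree P) s w"
proof (induction rule: gsym.induct)
  case (gterm a) then show ?case by (simp add: gsym.gterm)
next
  case (gnt X rhs ws)
  from eps_aux1[OF gnt(2)] obtain al' ws' where a: "del P rhs al'" "list_all2 (gsym (epsfree P)) al' ws'" "concat ws' = concat ws"
    by blast
  have "al' \<noteq> []" using a gnt(3) by auto
  then have "(X, al') \<in> epsfree P" using a gnt(1) unfolding epsfree_def by blast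
  then show ?case using gsym.gnt[OF _ a(2)] a(3) by metis
qed

lemma eps_aux2: "del P al al' \<Longrightarrow> list_all2 (gsym P) al' ws \<Longrightarrow> \<exists>ws2. list_all2 (gsym P) al ws2 \<and> concat ws2 = concat ws"
proof (induction arbitrary: ws rule: del.induct)
  case del_nil then show ?case by auto
next
  case (del_keep al al' s)
  then obtain w ws' where "ws = w # ws'" "gsym P s w" "list_all2 (gsym P) al' ws'" by (auto simp: list_all2_Cons1)
  then show ?case using del_keep.IH by (metis concat.simps(2) list_all2_Cons)
next
  case (del_drop s al al')
  then obtain ws2 where "list_all2 (gsym P) al ws2" "concat ws2 = concat ws" by blast
  then show ?case using del_drop(1) by (intro exI[of _ "[]#ws2"]) auto
qed

lemma eps_sound: "gsym (epsfree P) s w \<Longrightarrow> gsym P s w"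
proof (induction rule: gsym.induct)
  case (gterm a) then show ?case by (simp add: gsym.gterm)
next
  case (gnt X al' ws)
  then obtain al where a: "(X, al) \<in> P" "del P al al'" unfolding epsfree_def by blast
  have "list_all2 (gsym P) al' ws" using gnt(2) by (rule list_all2_mono) auto
  from eps_aux2[OF a(2) this] obtain ws2 where "list_all2 (gsym P) al ws2" "concat ws2 = concat ws" by blast
  then show ?case using gsym.gnt[OF a(1)] by metis
qed

definition nonempty_rhs :: "(nat \<times> 'a sym list) set \<Rightarrow> bool" where
  "nonempty_rhs P \<longleftrightarrow> (\<forall>(X, al) \<in> P. al \<noteq> [])"

lemma nonempty_epsfree: "nonempty_rhs (epsfree P)"
  unfolding nonempty_rhs_def epsfree_def by auto

lemma gsym_ne: assumes "nonempty_rhs P" shows "gsym P s w \<Longrightarrow> w \<noteq> []"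
proof (induction rule: gsym.induct)
  case (gterm a) then show ?case by simp
next
  case (gnt X rhs ws)
  have "rhs \<noteq> []" using gnt(1) assms unfolding nonempty_rhs_def by auto
  then obtain s rhs' where "rhs = s # rhs'" by (cases rhs) auto
  then show ?case using gnt(2) by (auto simp: list_all2_Cons1)
qed

lemma gseq_ne: "nonempty_rhs P \<Longrightarrow> gseq P al w \<Longrightarrow> al \<noteq> [] \<Longrightarrow> w \<noteq> []"
  by (cases al) (auto simp: gseq_Cons dest: gsym_ne)

lemma eps_iff: "gsym (epsfree P) s w \<longleftrightarrow> gsym P s w \<and> w \<noteq> []"
  using eps_sound eps_complete gsym_ne[OF nonempty_epsfree] by blast



section \<open>Left-corner real-time machine\<close>

definition ustep :: "(nat \<times> 'a sym list) set \<Rightarrow> 'a sym \<Rightarrow> 'a sym \<Rightarrow> bool" where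
  "ustep P s t \<longleftrightarrow> (\<exists>B. t = Inl B \<and> (B, [s]) \<in> P)"

abbreviation U :: "(nat \<times> 'a sym list) set \<Rightarrow> 'a sym \<Rightarrow> 'a sym \<Rightarrow> bool" where
  "U P \<equiv> (ustep P)\<^sup>*\<^sup>*"

inductive lc :: "(nat \<times> 'a sym list) set \<Rightarrow> nat \<Rightarrow> 'a sym \<Rightarrow> 'a list \<Rightarrow> bool" for P C where
  lc_refl: "lc P C (Inl C) []"
| lc_step: "(B', t # be) \<in> P \<Longrightarrow> gseq P be v1 \<Longrightarrow> lc P C (Inl B') v2 \<Longrightarrow> lc P C t (v1 @ v2)"

lemma lc_gsym: "lc P C t v \<Longrightarrow> gsym P t u \<Longrightarrow> gsym P (Inl C) (u @ v)"
proof (induction arbitrary: u rule: lc.induct)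
  case lc_refl then show ?case by simp
next
  case (lc_step B' t be v1 v2)
  have "gseq P (t#be) (u@v1)" using lc_step by (auto simp: gseq_Cons)
  then have "gsym P (Inl B') (u@v1)" using lc_step(1) by (auto simp: gsym_Inl)
  then show ?case using lc_step.IH by fastforce
qed

lemma gsym_lc: assumes ne: "nonempty_rhs P"
  shows "gsym P s w0 \<Longrightarrow> w0 = a # v \<Longrightarrow> lc P C s w \<Longrightarrow> lc P C (Inr a) (v @ w)"
proof (induction arbitrary: a v w rule: gsym.induct)
  case (gterm a') then show ?case by simp
next
  case (gnt X rhs ws)
  have "rhs \<noteq> []" using gnt(1) ne unfolding nonempty_rhs_def by auto
  then obtain t be where rhs: "rhs = t # be" by (cases rhs) auto
  then obtain w0 ws' where ws: "ws = w0 # ws'" "gsym P t w0" "\<And>a v w. w0 = a # v \<Longrightarrow> lc P C t w \<Longrightarrow> lc P C (Inr a) (v @ w)"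
     "list_all2 (\<lambda>s w. gsym P s w \<and> (\<forall>a v wa. w = a # v \<longrightarrow> lc P C s wa \<longrightarrow> lc P C (Inr a) (v @ wa))) be ws'"
    using gnt(2) by (auto simp: list_all2_Cons1)
  have "w0 \<noteq> []" using gsym_ne[OF ne ws(2)] .
  then obtain v0 where v0: "w0 = a # v0" "v = v0 @ concat ws'" using gnt(3) ws(1) by (cases w0) auto
  have "gseq P be (concat ws')" unfolding gseq_def using ws(4) by (auto elim: list_all2_mono)
  then have "lc P C t (concat ws' @ w)" using lc_step[OF gnt(1)[unfolded rhs]] gnt(4) by blast
  from ws(3)[OF v0(1) this] show ?case using v0 by simp
qed

lemma gsym_Inl_lc: "nonempty_rhs P \<Longrightarrow> gsym P (Inl C) (a # v) \<longleftrightarrow> lc P C (Inr a) v"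
  using gsym_lc[of P "Inl C" "a#v" a v C "[]"] lc_refl[of P C] lc_gsym[of P C "Inr a" v "[a]"] by auto

lemma lc_U: "U P t t' \<Longrightarrow> lc P C t' v \<Longrightarrow> lc P C t v"
proof (induction rule: converse_rtranclp_induct)
  case base then show ?case .
next
  case (step y z)
  then obtain B where "z = Inl B" "(B, [y]) \<in> P" unfolding ustep_def by blast
  then show ?case using lc_step[of B y "[]" P "[]" C v] step by simp
qed

lemma lc_decomp: "lc P C t v \<Longrightarrow> (U P t (Inl C) \<and> v = []) \<or>
  (\<exists>t' B' be v1 v2. U P t t' \<and> (B', t'#be) \<in> P \<and> be \<noteq> [] \<and> gseq P be v1 \<and> lc P C (Inl B') v2 \<and> v = v1@v2)"
proof (induction rule: lc.induct)
  case lc_refl then show ?case by simp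
next
  case (lc_step B' t be v1 v2)
  show ?case
  proof (cases "be = []")
    case False
    then show ?thesis using lc_step(1,2,3) by blast
  next
    case True
    then have v1: "v1 = []" using lc_step(2) by simp
    have un: "ustep P t (Inl B')" using lc_step(1) True unfolding ustep_def by simp
    from lc_step.IH show ?thesis
    proof
      assume a: "U P (Inl B') (Inl C) \<and> v2 = []"
      then have "U P t (Inl C)" using un by (meson converse_rtranclp_into_rtranclp)
      then show ?thesis using v1 a by simp
    next
      assume "\<exists>t' B'' be v1 v2'. U P (Inl B') t' \<and> (B'', t'#be) \<in> P \<and> be \<noteq> [] \<and> gseq P be v1 \<and> lc P C (Inl B'') v2' \<and> v2 = v1@v2'"
      then obtain t' B'' be' v1' v2' where o: "U P (Inl B') t'" "(B'', t'#be') \<in> P" "be' \<noteq> []" "gseq P be' v1'"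
        "lc P C (Inl B'') v2'" "v2 = v1'@v2'" by blast
      have "U P t t'" using un o(1) by (meson converse_rtranclp_into_rtranclp)
      then have "\<exists>t' B' be v1 v2. U P t t' \<and> (B', t'#be) \<in> P \<and> be \<noteq> [] \<and> gseq P be v1 \<and> lc P C (Inl B') v2 \<and> v1' @ v2' = v1@v2"
        using o by blast
      then show ?thesis using o(6) v1 by simp
    qed
  qed
qed

datatype 'a frame = Sym "'a sym" | Item nat nat

fun fsem :: "(nat \<times> 'a sym list) set \<Rightarrow> 'a frame \<Rightarrow> 'a list \<Rightarrow> bool" where
  "fsem P (Sym s) w = gsym P s w"
| "fsem P (Item C B) w = (lc P C (Inl B) w \<and> w \<noteq> [])"

definition fsemL :: "(nat \<times> 'a sym list) set \<Rightarrow> 'a frame list \<Rightarrow> 'a list \<Rightarrow> bool" where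
  "fsemL P fs w \<longleftrightarrow> (\<exists>ws. w = concat ws \<and> list_all2 (fsem P) fs ws)"

lemma fsemL_Nil[simp]: "fsemL P [] w \<longleftrightarrow> w = []"
  by (auto simp: fsemL_def)

lemma fsemL_Cons: "fsemL P (s#ss) w \<longleftrightarrow> (\<exists>v u. w = v@u \<and> fsem P s v \<and> fsemL P ss u)"
proof
  assume "fsemL P (s#ss) w"
  then show "\<exists>v u. w = v@u \<and> fsem P s v \<and> fsemL P ss u"
    by (auto simp: fsemL_def list_all2_Cons1) blast
next
  assume "\<exists>v u. w = v@u \<and> fsem P s v \<and> fsemL P ss u"
  then obtain v ws where "w = v @ concat ws" "fsem P s v" "list_all2 (fsem P) ss ws"
    by (auto simp: fsemL_def)
  then show "fsemL P (s#ss) w" unfolding fsemL_def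
    by (intro exI[of _ "v#ws"]) auto
qed

lemma fsemL_append: "fsemL P (xs@ys) w \<longleftrightarrow> (\<exists>w1 w2. w = w1@w2 \<and> fsemL P xs w1 \<and> fsemL P ys w2)"
proof (induction xs arbitrary: w)
  case Nil then show ?case by simp
next
  case (Cons x xs)
  show ?case
    unfolding append_Cons fsemL_Cons Cons
    by (metis append.assoc)
qed

lemma fsemL_map_Sym: "fsemL P (map Sym be) w \<longleftrightarrow> gseq P be w"
proof (induction be arbitrary: w)
  case Nil then show ?case by simp
next
  case (Cons s be) then show ?case by (simp add: fsemL_Cons gseq_Cons)
qed

lemma fsemL_single[simp]: "fsemL P [X] w \<longleftrightarrow> fsem P X w"
  by (simp add: fsemL_Cons)

definition tailok :: "(nat \<times> 'a sym list) set \<Rightarrow> nat \<Rightarrow> nat \<Rightarrow> 'a frame list \<Rightarrow> bool" where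
  "tailok P C B' opt \<longleftrightarrow> opt = [Item C B'] \<or> (opt = [] \<and> U P (Inl B') (Inl C))"

lemma tail_sound: "tailok P C B' opt \<Longrightarrow> fsemL P opt v \<Longrightarrow> lc P C (Inl B') v"
  unfolding tailok_def using lc_U lc_refl by fastforce

lemma tail_complete: "nonempty_rhs P \<Longrightarrow> lc P C (Inl B') v \<Longrightarrow> \<exists>opt. tailok P C B' opt \<and> fsemL P opt v"
proof -
  assume ne: "nonempty_rhs P" and l: "lc P C (Inl B') v"
  show ?thesis
  proof (cases "v = []")
    case False
    then show ?thesis using l by (intro exI[of _ "[Item C B']"]) (simp add: tailok_def)
  next
    case True
    from lc_decomp[OF l] have "U P (Inl B') (Inl C)"
    proof
      assume "\<exists>t' B'' be v1 v2. U P (Inl B') t' \<and> (B'', t'#be) \<in> P \<and> be \<noteq> [] \<and> gseq P be v1 \<and> lc P C (Inl B'') v2 \<and> v = v1@v2"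
      then obtain be v1 v2 where "be \<noteq> []" "gseq P be v1" "v = v1@v2" by blast
      then show ?thesis using gseq_ne[OF ne] True by simp
    qed simp
    then show ?thesis using True by (intro exI[of _ "[]"]) (simp add: tailok_def)
  qed
qed

definition msym :: "(nat \<times> 'a sym list) set \<Rightarrow> ('a frame \<times> 'a \<times> 'a frame list) set" where
  "msym P = {(Sym (Inr a), a, []) | a. True} \<union>
     {(Sym (Inl C), a, []) | C a. U P (Inr a) (Inl C)} \<union>
     {(Sym (Inl C), a, map Sym be @ opt) | C a t B' be opt. U P (Inr a) t \<and> (B', t#be) \<in> P \<and> be \<noteq> [] \<and> tailok P C B' opt}"

definition mitem :: "(nat \<times> 'a sym list) set \<Rightarrow> ('a frame \<times> 'a \<times> 'a frame list) set" where
  "mitem P = {(Item C B, a, u1 @ map Sym rest @ opt) | C B a t B' s1 rest u1 opt.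
      U P (Inl B) t \<and> (B', t # s1 # rest) \<in> P \<and> (Sym s1, a, u1) \<in> msym P \<and> tailok P C B' opt}"

definition moves :: "(nat \<times> 'a sym list) set \<Rightarrow> ('a frame \<times> 'a \<times> 'a frame list) set" where
  "moves P = msym P \<union> mitem P"

lemma msym_sound: "(X, a, u) \<in> msym P \<Longrightarrow> fsemL P u w1 \<Longrightarrow> fsem P X (a # w1)"
proof -
  assume m: "(X, a, u) \<in> msym P" and f: "fsemL P u w1"
  from m consider "X = Sym (Inr a)" "u = []"
    | C where "X = Sym (Inl C)" "u = []" "U P (Inr a) (Inl C)"
    | C t B' be opt where "X = Sym (Inl C)" "u = map Sym be @ opt" "U P (Inr a) t" "(B', t#be) \<in> P" "tailok P C B' opt"
    unfolding msym_def by blast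
  then show ?thesis
  proof cases
    case 1 then show ?thesis using f by simp
  next
    case (2 C)
    then have "lc P C (Inr a) []" using lc_U lc_refl by blast
    then show ?thesis using 2 f lc_gsym[of P C "Inr a" "[]" "[a]"] by simp
  next
    case (3 C t B' be opt)
    then obtain v1 v2 where "w1 = v1 @ v2" "gseq P be v1" "fsemL P opt v2"
      using f by (auto simp: fsemL_append fsemL_map_Sym)
    then have "lc P C t (v1@v2)" using lc_step[OF 3(4)] tail_sound[OF 3(5)] by blast
    then have "lc P C (Inr a) (v1@v2)" using lc_U 3(3) by blast
    then show ?thesis using 3 \<open>w1 = _\<close> lc_gsym[of P C "Inr a" "v1@v2" "[a]"] by simp
  qed
qed

lemma move_sound: "(X, a, u) \<in> moves P \<Longrightarrow> fsemL P u w1 \<Longrightarrow> fsem P X (a # w1)"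
proof -
  assume m: "(X, a, u) \<in> moves P" and f: "fsemL P u w1"
  show ?thesis
  proof (cases "(X, a, u) \<in> msym P")
    case True show ?thesis by (rule msym_sound[OF True f])
  next
    case False
    then obtain C B t B' s1 rest u1 opt where i: "X = Item C B" "u = u1 @ map Sym rest @ opt" "U P (Inl B) t"
      "(B', t # s1 # rest) \<in> P" "(Sym s1, a, u1) \<in> msym P" "tailok P C B' opt"
      using m unfolding moves_def mitem_def by blast
    then obtain x1 x2 x3 where x: "w1 = x1 @ x2 @ x3" "fsemL P u1 x1" "gseq P rest x2" "fsemL P opt x3"
      using f by (auto simp: fsemL_append fsemL_map_Sym)
    have "gsym P s1 (a # x1)" using msym_sound[OF i(5) x(2)] by simp
    then have "gseq P (s1 # rest) ((a # x1) @ x2)" using x(3) gseq_Cons by blast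
    then have "lc P C t (((a # x1) @ x2) @ x3)" using lc_step[OF i(4)] tail_sound[OF i(6) x(4)] by blast
    then have "lc P C (Inl B) (a # w1)" using lc_U[OF i(3)] x(1) by simp
    then show ?thesis using i(1) by simp
  qed
qed

lemma msym_I1: "(Sym (Inr a), a, []) \<in> msym P"
  unfolding msym_def by blast

lemma msym_I2: "U P (Inr a) (Inl C) \<Longrightarrow> (Sym (Inl C), a, []) \<in> msym P"
  unfolding msym_def by blast

lemma msym_I3: "U P (Inr a) t \<Longrightarrow> (B', t#be) \<in> P \<Longrightarrow> be \<noteq> [] \<Longrightarrow> tailok P C B' opt \<Longrightarrow>
   (Sym (Inl C), a, map Sym be @ opt) \<in> msym P"
  unfolding msym_def by blast

lemma mitem_I: "U P (Inl B) t \<Longrightarrow> (B', t#s1#rest) \<in> P \<Longrightarrow> (Sym s1,a,u1) \<in> msym P \<Longrightarrow> tailok P C B' opt \<Longrightarrow>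
   (Item C B, a, u1 @ map Sym rest @ opt) \<in> moves P"
  unfolding moves_def mitem_def by blast

lemma msym_complete: assumes ne: "nonempty_rhs P"
  shows "gsym P s w \<Longrightarrow> \<exists>a w1 u. w = a # w1 \<and> (Sym s, a, u) \<in> msym P \<and> fsemL P u w1"
proof -
  assume g: "gsym P s w"
  show ?thesis
  proof (cases s)
    case (Inr a)
    then show ?thesis using g msym_I1[of a P] by auto
  next
    case (Inl C)
    obtain a v where w: "w = a # v" using gsym_ne[OF ne g] by (cases w) auto
    then have l: "lc P C (Inr a) v" using gsym_Inl_lc[OF ne] g Inl by simp
    from lc_decomp[OF l] show ?thesis
    proof
      assume "U P (Inr a) (Inl C) \<and> v = []"
      then show ?thesis using w Inl msym_I2[of P a C] by auto
    next
      assume "\<exists>t' B' be v1 v2. U P (Inr a) t' \<and> (B', t'#be) \<in> P \<and> be \<noteq> [] \<and> gseq P be v1 \<and> lc P C (Inl B') v2 \<and> v = v1@v2"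
      then obtain t' B' be v1 v2 where d: "U P (Inr a) t'" "(B', t'#be) \<in> P" "be \<noteq> []" "gseq P be v1" "lc P C (Inl B') v2" "v = v1@v2"
        by blast
      obtain opt where o: "tailok P C B' opt" "fsemL P opt v2" using tail_complete[OF ne d(5)] by blast
      have "(Sym s, a, map Sym be @ opt) \<in> msym P" using msym_I3[OF d(1) d(2) d(3) o(1)] Inl by simp
      moreover have "fsemL P (map Sym be @ opt) v" using d o by (auto simp: fsemL_append fsemL_map_Sym)
      ultimately show ?thesis using w by blast
    qed
  qed
qed

lemma move_complete: assumes ne: "nonempty_rhs P"
  shows "fsem P X w \<Longrightarrow> \<exists>a w1 u. w = a # w1 \<and> (X, a, u) \<in> moves P \<and> fsemL P u w1"
proof (cases X)
  case (Sym s)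
  assume "fsem P X w"
  then obtain a w1 u where "w = a # w1" "(Sym s, a, u) \<in> msym P" "fsemL P u w1" using msym_complete[OF ne, of s w] Sym \<open>fsem P X w\<close> by auto
  then show ?thesis using Sym unfolding moves_def by blast
next
  case (Item C B)
  assume "fsem P X w"
  then have l: "lc P C (Inl B) w" "w \<noteq> []" using Item by auto
  from lc_decomp[OF l(1)] show ?thesis
  proof
    assume "U P (Inl B) (Inl C) \<and> w = []" then show ?thesis using l by simp
  next
    assume "\<exists>t' B' be v1 v2. U P (Inl B) t' \<and> (B', t'#be) \<in> P \<and> be \<noteq> [] \<and> gseq P be v1 \<and> lc P C (Inl B') v2 \<and> w = v1@v2"
    then obtain t' B' be v1 v2 where d: "U P (Inl B) t'" "(B', t'#be) \<in> P" "be \<noteq> []" "gseq P be v1" "lc P C (Inl B') v2" "w = v1@v2"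
      by blast
    obtain s1 rest where be: "be = s1 # rest" using d(3) by (cases be) auto
    obtain x1 x2 where x: "v1 = x1 @ x2" "gsym P s1 x1" "gseq P rest x2" using d(4) be by (auto simp: gseq_Cons)
    obtain a x1' u1 where m: "x1 = a # x1'" "(Sym s1, a, u1) \<in> msym P" "fsemL P u1 x1'"
      using msym_complete[OF ne x(2)] by blast
    obtain opt where o: "tailok P C B' opt" "fsemL P opt v2" using tail_complete[OF ne d(5)] by blast
    have "(X, a, u1 @ map Sym rest @ opt) \<in> moves P"
      using Item mitem_I[OF d(1) _ m(2) o(1)] d(2) be by simp
    moreover have "fsemL P (u1 @ map Sym rest @ opt) (x1' @ x2 @ v2)"
      using m(3) x(3) o(2) by (auto simp: fsemL_append fsemL_map_Sym)
    ultimately show ?thesis using d(6) x(1) m(1) by auto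
  qed
qed

inductive amgen :: "('f \<times> 'a \<times> 'f list) set \<Rightarrow> 'f list \<Rightarrow> 'a list \<Rightarrow> bool" for M where
  am_nil: "amgen M [] []"
| am_step: "(X, a, u) \<in> M \<Longrightarrow> amgen M (u @ s) w \<Longrightarrow> amgen M (X # s) (a # w)"

lemma amgen_sound: "amgen (moves P) fs w \<Longrightarrow> fsemL P fs w"
proof (induction rule: amgen.induct)
  case am_nil then show ?case by simp
next
  case (am_step X a u s w)
  then obtain w1 w2 where "w = w1 @ w2" "fsemL P u w1" "fsemL P s w2" by (auto simp: fsemL_append)
  then have "fsem P X (a # w1)" using move_sound[OF am_step(1)] by blast
  then show ?case using \<open>w = w1 @ w2\<close> \<open>fsemL P s w2\<close> fsemL_Cons[of P X s "(a # w1) @ w2"] by auto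
qed

lemma amgen_complete: assumes ne: "nonempty_rhs P"
  shows "fsemL P fs w \<Longrightarrow> amgen (moves P) fs w"
proof (induction "length w" arbitrary: fs w rule: less_induct)
  case less
  show ?case
  proof (cases fs)
    case Nil then show ?thesis using less.prems by (simp add: am_nil)
  next
    case (Cons X s)
    then obtain w1 w2 where a: "w = w1 @ w2" "fsem P X w1" "fsemL P s w2" using less.prems by (auto simp: fsemL_Cons)
    obtain a w1' u where b: "w1 = a # w1'" "(X, a, u) \<in> moves P" "fsemL P u w1'" using move_complete[OF ne a(2)] by blast
    have "fsemL P (u @ s) (w1' @ w2)" using b(3) a(3) by (auto simp: fsemL_append)
    then have "amgen (moves P) (u @ s) (w1' @ w2)" using less.hyps a(1) b(1) by simp
    then show ?thesis using am_step[OF b(2)] Cons a(1) b(1) by simp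
  qed
qed



section \<open>Cache machine\<close>

definition cQ :: "'a set \<Rightarrow> 'f set \<Rightarrow> nat \<Rightarrow> ('a \<times> 'f list) set" where
  "cQ Sig Fr K = {(a, c). a \<in> Sig \<and> set c \<subseteq> Fr \<and> length c \<le> K}"

definition cG :: "'f set \<Rightarrow> nat \<Rightarrow> 'f list set" where
  "cG Fr K = {p. set p \<subseteq> Fr \<and> length p \<le> K}"

definition cdelta :: "('f \<times> 'a \<times> 'f list) set \<Rightarrow> 'a set \<Rightarrow> 'f set \<Rightarrow> nat \<Rightarrow>
    (('a \<times> 'f list) \<times> 'f list option \<times> 'f list option \<times> ('a \<times> 'f list)) set" where
  "cdelta M Sig Fr K =
    {((a, X#rest), Some ob, None, (a', ob)) | a X rest a' u ob.
        (a, X#rest) \<in> cQ Sig Fr K \<and> (X,a',u) \<in> M \<and> u @ rest = [] \<and> ob \<in> cG Fr K \<and> a' \<in> Sig} \<union>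
    {((a, X#rest), None, None, (a', u@rest)) | a X rest a' u.
        (a, X#rest) \<in> cQ Sig Fr K \<and> (X,a',u) \<in> M \<and> u @ rest \<noteq> [] \<and> (a', u@rest) \<in> cQ Sig Fr K} \<union>
    {((a, X#rest), None, Some p, (a', c')) | a X rest a' u c' p.
        (a, X#rest) \<in> cQ Sig Fr K \<and> (X,a',u) \<in> M \<and> u @ rest = c' @ p \<and> c' \<noteq> [] \<and> p \<noteq> [] \<and>
        (a', c') \<in> cQ Sig Fr K \<and> p \<in> cG Fr K}"

definition cm :: "('f \<times> 'a \<times> 'f list) set \<Rightarrow> 'a set \<Rightarrow> 'f set \<Rightarrow> nat \<Rightarrow> 'f \<Rightarrow> ('a \<times> 'f list, 'f list, 'a) gm" where
  "cm M Sig Fr K Sz = \<lparr>gQ = cQ Sig Fr K, gG = cG Fr K, gdelta = cdelta M Sig Fr K, gout = fst,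
     ginit = {(a,u) | a u. (Sz,a,u) \<in> M \<and> u \<noteq> [] \<and> (a,u) \<in> cQ Sig Fr K}, gfin = {(a,[]) | a. a \<in> Sig}\<rparr>"

lemma cm_simps[simp]: "gQ (cm M Sig Fr K Sz) = cQ Sig Fr K" "gG (cm M Sig Fr K Sz) = cG Fr K"
  "gdelta (cm M Sig Fr K Sz) = cdelta M Sig Fr K" "gout (cm M Sig Fr K Sz) = fst"
  "ginit (cm M Sig Fr K Sz) = {(a,u) | a u. (Sz,a,u) \<in> M \<and> u \<noteq> [] \<and> (a,u) \<in> cQ Sig Fr K}"
  "gfin (cm M Sig Fr K Sz) = {(a,[]) | a. a \<in> Sig}"
  by (simp_all add: cm_def)

lemma cdelta_cases:
  assumes "(q, g, g', q') \<in> cdelta M Sig Fr K"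
  obtains (pop) a X rest a' u ob where "q = (a, X#rest)" "g = Some ob" "g' = None" "q' = (a', ob)" "(X,a',u) \<in> M" "u @ rest = []"
  | (ign) a X rest a' u where "q = (a, X#rest)" "g = None" "g' = None" "q' = (a', u@rest)" "(X,a',u) \<in> M"
  | (push) a X rest a' u c' p where "q = (a, X#rest)" "g = None" "g' = Some p" "q' = (a', c')" "(X,a',u) \<in> M" "u @ rest = c' @ p"
  using assms unfolding cdelta_def Un_iff mem_Collect_eq
  apply (elim disjE exE conjE Pair_inject)
  subgoal by (rule pop, assumption+)
  subgoal by (rule ign, assumption+)
  subgoal by (rule push, assumption+)
  done

lemma cdelta_pop: "(a, X#rest) \<in> cQ Sig Fr K \<Longrightarrow> (X,a',u) \<in> M \<Longrightarrow> u @ rest = [] \<Longrightarrow> ob \<in> cG Fr K \<Longrightarrow> a' \<in> Sig \<Longrightarrow>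
  ((a, X#rest), Some ob, None, (a', ob)) \<in> cdelta M Sig Fr K"
  unfolding cdelta_def
  by (rule UnI1, rule UnI1, simp only: mem_Collect_eq, intro exI conjI, rule refl, assumption+)

lemma cdelta_ign: "(a, X#rest) \<in> cQ Sig Fr K \<Longrightarrow> (X,a',u) \<in> M \<Longrightarrow> u @ rest \<noteq> [] \<Longrightarrow> (a', u@rest) \<in> cQ Sig Fr K \<Longrightarrow>
  ((a, X#rest), None, None, (a', u@rest)) \<in> cdelta M Sig Fr K"
  unfolding cdelta_def
  by (rule UnI1, rule UnI2, simp only: mem_Collect_eq, intro exI conjI, rule refl, assumption+)

lemma cdelta_push: "(a, X#rest) \<in> cQ Sig Fr K \<Longrightarrow> (X,a',u) \<in> M \<Longrightarrow> u @ rest = c' @ p \<Longrightarrow> c' \<noteq> [] \<Longrightarrow> p \<noteq> [] \<Longrightarrow>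
  (a', c') \<in> cQ Sig Fr K \<Longrightarrow> p \<in> cG Fr K \<Longrightarrow>
  ((a, X#rest), None, Some p, (a', c')) \<in> cdelta M Sig Fr K"
  unfolding cdelta_def
  by (rule UnI2, simp only: mem_Collect_eq, intro exI conjI, rule refl, assumption+)

lemma amgen_Nil: "amgen M [] w \<Longrightarrow> w = []"
  by (erule amgen.cases) auto

lemma cm_sound: "grr (cm M Sig Fr K Sz) c cf w \<Longrightarrow> gfinal (cm M Sig Fr K Sz) cf \<Longrightarrow>
  amgen M (snd (fst c) @ concat (snd c)) w \<and> (snd c = [] \<longrightarrow> snd (fst c) = []) \<and> (snd c \<noteq> [] \<longrightarrow> last (snd c) = [])"
proof (induction rule: grr.induct)
  case (grr_refl c)
  then show ?case by (auto simp: gfinal_def intro: am_nil)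
next
  case (grr_step c d e w)
  have IH: "amgen M (snd (fst d) @ concat (snd d)) w" "snd d = [] \<longrightarrow> snd (fst d) = []" "snd d \<noteq> [] \<longrightarrow> last (snd d) = []"
    using grr_step.IH grr_step.prems by auto
  from grr_step(1) obtain qq g g' q' al where m: "(qq,g,g',q') \<in> cdelta M Sig Fr K" "c = (qq, gopt g @ al)"
    "d = (q', gopt g' @ al)" "gopt g @ al \<noteq> []" unfolding gmove_def by auto
  from m(1) show ?case
  proof (cases rule: cdelta_cases)
    case (pop a X rest a' u ob)
    then have "u = []" "rest = []" by auto
    have "amgen M (X # rest @ concat (snd c)) (a' # w)"
      using am_step[of X a' u M "rest @ concat (snd c)" w] pop IH m \<open>u = []\<close> \<open>rest = []\<close> by simp
    moreover have "last (snd c) = []" using IH m pop by auto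
    ultimately show ?thesis using m pop by simp
  next
    case (ign a X rest a' u)
    have "amgen M (X # rest @ concat (snd c)) (a' # w)"
      using am_step[of X a' u M "rest @ concat (snd c)" w] ign IH m by simp
    moreover have "snd c \<noteq> []" using m ign by simp
    ultimately show ?thesis using m ign IH by simp
  next
    case (push a X rest a' u c' p)
    have "amgen M (c' @ p @ concat al) w" using IH(1) m push by simp
    then have "amgen M (u @ rest @ concat al) w" by (metis append.assoc push(6))
    then have "amgen M (X # rest @ concat (snd c)) (a' # w)"
      using am_step[of X a' u M "rest @ concat (snd c)" w] push m by simp
    moreover have "snd c \<noteq> []" using m push by simp
    moreover have "last (snd c) = []" using IH m push \<open>snd c \<noteq> []\<close> by auto
    ultimately show ?thesis using m push IH by simp
  qed
qed

lemma cm_complete: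
  assumes clos: "\<And>X a u. X \<in> Fr \<Longrightarrow> (X,a,u) \<in> M \<Longrightarrow> a \<in> Sig \<and> set u \<subseteq> Fr \<and> length u < K"
  shows "amgen M fs w \<Longrightarrow> fs = c @ concat R \<Longrightarrow> c \<noteq> [] \<Longrightarrow> (a, c) \<in> cQ Sig Fr K \<Longrightarrow> R \<noteq> [] \<Longrightarrow> last R = [] \<Longrightarrow>
    (\<forall>ob \<in> set (butlast R). ob \<noteq> [] \<and> ob \<in> cG Fr K) \<Longrightarrow>
    \<exists>cf. gfinal (cm M Sig Fr K Sz) cf \<and> grr (cm M Sig Fr K Sz) ((a,c),R) cf w"
proof (induction arbitrary: a c R rule: amgen.induct)
  case am_nil then show ?case by simp
next
  case (am_step X a' u s w)
  let ?B = "cm M Sig Fr K Sz"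
  obtain rest where c: "c = X # rest" "s = rest @ concat R" using am_step.prems(1,2) by (cases c) auto
  have cQ: "a \<in> Sig" "set c \<subseteq> Fr" "length c \<le> K" using am_step.prems(3) by (auto simp: cQ_def)
  then have XF: "X \<in> Fr" using c by auto
  have cl: "a' \<in> Sig" "set u \<subseteq> Fr" "length u < K" using clos[OF XF am_step(1)] by auto
  define T' where "T' = u @ rest"
  have T'F: "set T' \<subseteq> Fr" using cl cQ c by (auto simp: T'_def)
  have T'len: "length T' < 2 * K" using cl cQ c by (auto simp: T'_def)
  have us: "u @ s = T' @ concat R" using c by (simp add: T'_def)
  show ?case
  proof (cases "T' = []")
    case True
    then have u0: "u @ rest = []" by (simp add: T'_def)
    obtain ob R' where R: "R = ob # R'" using am_step.prems(4) by (cases R) auto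
    show ?thesis
    proof (cases "R' = []")
      case True
      then have ob: "ob = []" using R am_step.prems(5) by simp
      have "ob \<in> cG Fr K" using ob by (simp add: cG_def)
      then have tr: "((a, X#rest), Some ob, None, (a', ob)) \<in> cdelta M Sig Fr K"
        using cdelta_pop[of a X rest Sig Fr K a' u M ob] am_step.prems(3) c am_step(1) u0 cl by simp
      have mv: "gmove ?B ((a,c),R) ((a',[]),[])" unfolding gmove_def using tr c R True ob
        by (intro exI[of _ "(a, X#rest)"] exI[of _ "Some ob"] exI[of _ None] exI[of _ "(a',ob)"] exI[of _ "[]"]) simp
      have "u @ s = []" using us \<open>T' = []\<close> R \<open>R' = []\<close> ob by simp
      then have "w = []" using am_step(2) amgen_Nil by metis
      then have "grr ?B ((a,c),R) ((a',[]),[]) (a' # w)" using grr_single[OF mv] by simp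
      moreover have "gfinal ?B ((a',[]),[])" using cl by (simp add: gfinal_def)
      ultimately show ?thesis by blast
    next
      case False
      have ob: "ob \<noteq> []" "ob \<in> cG Fr K" using am_step.prems(6) R False by auto
      have tr: "((a, X#rest), Some ob, None, (a', ob)) \<in> cdelta M Sig Fr K"
        using cdelta_pop[of a X rest Sig Fr K a' u M ob] am_step.prems(3) c am_step(1) u0 cl ob by simp
      have mv: "gmove ?B ((a,c),R) ((a',ob),R')" unfolding gmove_def using tr c R
        by (intro exI[of _ "(a, X#rest)"] exI[of _ "Some ob"] exI[of _ None] exI[of _ "(a',ob)"] exI[of _ R']) simp
      have "u @ s = ob @ concat R'" using us True R by simp
      moreover have "(a', ob) \<in> cQ Sig Fr K" using ob cl by (auto simp: cQ_def cG_def)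
      moreover have "last R' = []" using am_step.prems(5) R False by simp
      moreover have "\<forall>ob \<in> set (butlast R'). ob \<noteq> [] \<and> ob \<in> cG Fr K" using am_step.prems(6) R False
        by (auto simp: in_set_butlastD)
      ultimately obtain cf where "gfinal ?B cf" "grr ?B ((a',ob),R') cf w"
        using am_step.IH[of ob R' a'] ob False by blast
      then show ?thesis using grr.grr_step[OF mv] by fastforce
    qed
  next
    case False
    show ?thesis
    proof (cases "length T' \<le> K")
      case True
      have q': "(a', T') \<in> cQ Sig Fr K" using T'F True cl by (simp add: cQ_def)
      have tr: "((a, X#rest), None, None, (a', u@rest)) \<in> cdelta M Sig Fr K"
        using cdelta_ign[of a X rest Sig Fr K a' u M] am_step.prems(3) c am_step(1) False q' by (simp add: T'_def)
      have mv: "gmove ?B ((a,c),R) ((a',T'),R)" unfolding gmove_def using tr c am_step.prems(4)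
        by (intro exI[of _ "(a, X#rest)"] exI[of _ None] exI[of _ None] exI[of _ "(a',T')"] exI[of _ R]) (simp add: T'_def)
      obtain cf where "gfinal ?B cf" "grr ?B ((a',T'),R) cf w"
        using am_step.IH[of T' R a'] us False q' am_step.prems(4-6) by blast
      then show ?thesis using grr.grr_step[OF mv] by fastforce
    next
      case big: False
      define k where "k = length T' - K"
      define c' where "c' = take k T'"
      define p where "p = drop k T'"
      have lens: "length c' = k" "length p = K" "k \<le> K" "0 < k" "0 < K" using big T'len
        by (auto simp: c'_def p_def k_def)
      have cp: "T' = c' @ p" by (simp add: c'_def p_def)
      have c'ne: "c' \<noteq> []" "p \<noteq> []" using lens by auto
      have sets: "set c' \<subseteq> Fr" "set p \<subseteq> Fr" using T'F cp by auto
      have q': "(a', c') \<in> cQ Sig Fr K" using sets lens cl by (simp add: cQ_def)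
      have pG: "p \<in> cG Fr K" using sets lens by (simp add: cG_def)
      have tr: "((a, X#rest), None, Some p, (a', c')) \<in> cdelta M Sig Fr K"
        using cdelta_push[of a X rest Sig Fr K a' u M c' p] am_step.prems(3) c am_step(1) c'ne q' pG cp
        by (simp add: T'_def)
      have mv: "gmove ?B ((a,c),R) ((a',c'),p # R)" unfolding gmove_def using tr c am_step.prems(4)
        by (intro exI[of _ "(a, X#rest)"] exI[of _ None] exI[of _ "Some p"] exI[of _ "(a',c')"] exI[of _ R]) simp
      have "u @ s = c' @ concat (p # R)" using us cp by simp
      moreover have "last (p # R) = []" using am_step.prems(4,5) by simp
      moreover have "\<forall>ob \<in> set (butlast (p # R)). ob \<noteq> [] \<and> ob \<in> cG Fr K" using am_step.prems(4,6) c'ne pG by auto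
      ultimately obtain cf where "gfinal ?B cf" "grr ?B ((a',c'),p # R) cf w"
        using am_step.IH[of c' "p # R" a'] c'ne q' by blast
      then show ?thesis using grr.grr_step[OF mv] by fastforce
    qed
  qed
qed

lemma cm_lang:
  assumes clos: "\<And>X a u. X \<in> Fr \<Longrightarrow> (X,a,u) \<in> M \<Longrightarrow> a \<in> Sig \<and> set u \<subseteq> Fr \<and> length u < K"
  shows "glang (cm M Sig Fr K Sz) = {a # w | a u w. (Sz,a,u) \<in> M \<and> u \<noteq> [] \<and> (a,u) \<in> cQ Sig Fr K \<and> amgen M u w}"
proof (intro set_eqI iffI)
  fix x assume "x \<in> glang (cm M Sig Fr K Sz)"
  then obtain c cf w where x: "x = fst (fst c) # w" "ginitial (cm M Sig Fr K Sz) c" "gfinal (cm M Sig Fr K Sz) cf"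
      "grr (cm M Sig Fr K Sz) c cf w" unfolding glang_def by auto
  then obtain a u g where c: "c = ((a,u),[g])" "(Sz,a,u) \<in> M" "u \<noteq> []" "(a,u) \<in> cQ Sig Fr K"
    unfolding ginitial_def by (cases c) auto
  from cm_sound[OF x(4) x(3)] have "amgen M (u @ g) w" "g = []" using c by auto
  then show "x \<in> {a # w | a u w. (Sz,a,u) \<in> M \<and> u \<noteq> [] \<and> (a,u) \<in> cQ Sig Fr K \<and> amgen M u w}"
    using x c by auto
next
  fix x assume "x \<in> {a # w | a u w. (Sz,a,u) \<in> M \<and> u \<noteq> [] \<and> (a,u) \<in> cQ Sig Fr K \<and> amgen M u w}"
  then obtain a u w where x: "x = a # w" "(Sz,a,u) \<in> M" "u \<noteq> []" "(a,u) \<in> cQ Sig Fr K" "amgen M u w" by blast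
  have "\<exists>cf. gfinal (cm M Sig Fr K Sz) cf \<and> grr (cm M Sig Fr K Sz) ((a,u),[[]]) cf w"
    by (rule cm_complete[OF clos x(5)]) (use x in \<open>auto simp: cG_def\<close>)
  then obtain cf where "gfinal (cm M Sig Fr K Sz) cf" "grr (cm M Sig Fr K Sz) ((a,u),[[]]) cf w" by blast
  moreover have "ginitial (cm M Sig Fr K Sz) ((a,u),[[]])" using x by (auto simp: ginitial_def cG_def)
  ultimately show "x \<in> glang (cm M Sig Fr K Sz)" unfolding glang_def using x(1)
    by (intro CollectI exI[of _ "((a,u),[[]])"] exI[of _ cf] exI[of _ w]) simp
qed



lemma map_gopt: "map f (gopt g) = gopt (map_option f g)"
  by (cases g) auto

lemma rename_exists:
  fixes B :: "('q,'g,'a) gm"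
  assumes fQ: "finite (gQ B)" and fG: "finite (gG B)"
    and tr: "\<And>q g g' q'. (q,g,g',q') \<in> gdelta B \<Longrightarrow> q \<in> gQ B \<and> q' \<in> gQ B \<and> set_option g \<subseteq> gG B \<and>
          set_option g' \<subseteq> gG B \<and> \<not> (g \<noteq> None \<and> g' \<noteq> None)"
    and outS: "\<And>q. q \<in> gQ B \<Longrightarrow> gout B q \<in> Sig" and iQ: "ginit B \<subseteq> gQ B" and fiQ: "gfin B \<subseteq> gQ B"
  shows "\<exists>A. wf_mpda Sig A \<and> mpda_lang A = glang B"
proof -
  obtain fq :: "'q \<Rightarrow> nat" where fq: "inj_on fq (gQ B)" using finite_imp_inj_to_nat_seg[OF fQ] by blast
  obtain fg :: "'g \<Rightarrow> nat" where fg: "inj_on fg (gG B)" using finite_imp_inj_to_nat_seg[OF fG] by blast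
  define A where "A = \<lparr>states = fq ` gQ B, stack_syms = fg ` gG B,
     delta = (\<lambda>(p,g,g',p'). (fq p, map_option fg g, map_option fg g', fq p')) ` gdelta B,
     out = (\<lambda>n. gout B (inv_into (gQ B) fq n)), init = fq ` ginit B, fin = fq ` gfin B\<rparr>"
  have As: "states A = fq ` gQ B" "stack_syms A = fg ` gG B"
     "delta A = (\<lambda>(p,g,g',p'). (fq p, map_option fg g, map_option fg g', fq p')) ` gdelta B"
     "out A = (\<lambda>n. gout B (inv_into (gQ B) fq n))" "init A = fq ` ginit B" "fin A = fq ` gfin B"
    by (simp_all add: A_def)
  have outA: "out A (fq q) = gout B q" if "q \<in> gQ B" for q using that fq by (simp add: As inv_into_f_f)
  have wf: "wf_mpda Sig A"
    unfolding wf_mpda_def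
  proof (intro conjI)
    show "finite (states A)" "finite (stack_syms A)" using fQ fG by (simp_all add: As)
    show "\<forall>(q, g, g', q') \<in> delta A. q \<in> states A \<and> q' \<in> states A \<and>
        set_option g \<subseteq> stack_syms A \<and> set_option g' \<subseteq> stack_syms A \<and> \<not> (g \<noteq> None \<and> g' \<noteq> None)"
    proof
      fix x assume "x \<in> delta A"
      then obtain p g g' p' where x: "x = (fq p, map_option fg g, map_option fg g', fq p')" "(p,g,g',p') \<in> gdelta B"
        by (auto simp: As)
      from tr[OF x(2)] show "case x of (q, g, g', q') \<Rightarrow> q \<in> states A \<and> q' \<in> states A \<and>
        set_option g \<subseteq> stack_syms A \<and> set_option g' \<subseteq> stack_syms A \<and> \<not> (g \<noteq> None \<and> g' \<noteq> None)"
        using x(1) by (cases g; cases g') (auto simp: As)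
    qed
    show "\<forall>q \<in> states A. out A q \<in> Sig" using outA outS by (auto simp: As(1))
    show "init A \<subseteq> states A" "fin A \<subseteq> states A" using iQ fiQ by (auto simp: As)
  qed
  define enc :: "'q \<times> 'g list \<Rightarrow> nat \<times> nat list" where "enc c = (fq (fst c), map fg (snd c))" for c
  define valid :: "'q \<times> 'g list \<Rightarrow> bool" where "valid c \<longleftrightarrow> fst c \<in> gQ B \<and> set (snd c) \<subseteq> gG B" for c
  have mv1: "gmove (toG A) (enc c) (enc d) \<and> valid d" if "gmove B c d" "valid c" for c d
  proof -
    from that(1) obtain q g g' q' al where m: "(q,g,g',q') \<in> gdelta B" "c = (q, gopt g @ al)" "d = (q', gopt g' @ al)" "gopt g @ al \<noteq> []"
      unfolding gmove_def by blast
    have "(fq q, map_option fg g, map_option fg g', fq q') \<in> delta A" using m(1) by (force simp: As)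
    moreover have "enc c = (fq q, gopt (map_option fg g) @ map fg al)" "enc d = (fq q', gopt (map_option fg g') @ map fg al)"
      using m by (simp_all add: enc_def map_gopt)
    moreover have "gopt (map_option fg g) @ map fg al \<noteq> []" using m(4) by (cases g) auto
    ultimately have "gmove (toG A) (enc c) (enc d)" unfolding gmove_def toG_def by auto
    moreover have "valid d" using tr[OF m(1)] that(2) m by (cases g; cases g') (auto simp: valid_def)
    ultimately show ?thesis by blast
  qed
  have R1: "grr B c e w \<Longrightarrow> valid c \<Longrightarrow> grr (toG A) (enc c) (enc e) w \<and> valid e" for c e w
  proof (induction rule: grr.induct)
    case (grr_refl c) then show ?case by (simp add: grr.grr_refl)
  next
    case (grr_step c d e w)
    have "gmove (toG A) (enc c) (enc d)" "valid d" using mv1 grr_step by auto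
    moreover have "gout (toG A) (fst (enc d)) = gout B (fst d)" using \<open>valid d\<close> outA by (simp add: toG_def enc_def valid_def)
    ultimately show ?case using grr.grr_step[of "toG A" "enc c" "enc d"] grr_step.IH by metis
  qed
  have mv2: "\<exists>d. d' = enc d \<and> gmove B c d \<and> valid d" if "gmove (toG A) (enc c) d'" "valid c" for c d'
  proof -
    from that(1) obtain n h h' n' al' where m: "(n,h,h',n') \<in> delta A" "enc c = (n, gopt h @ al')" "d' = (n', gopt h' @ al')"
      "gopt h @ al' \<noteq> []" unfolding gmove_def toG_def by auto
    then obtain q g g' q' where t: "(q,g,g',q') \<in> gdelta B" "n = fq q" "h = map_option fg g" "h' = map_option fg g'" "n' = fq q'"
      by (auto simp: As)
    have tv: "q \<in> gQ B \<and> q' \<in> gQ B \<and> set_option g \<subseteq> gG B \<and> set_option g' \<subseteq> gG B" using tr[OF t(1)] by blast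
    have "fq (fst c) = fq q" using m(2) t(2) by (simp add: enc_def)
    then have qc: "fst c = q" using fq that(2) tv by (auto simp: valid_def inj_on_def)
    have ms: "map fg (snd c) = gopt (map_option fg g) @ al'" using m(2) t(3) by (simp add: enc_def)
    have "\<exists>rest. snd c = gopt g @ rest \<and> al' = map fg rest"
    proof (cases g)
      case None then show ?thesis using ms by simp
    next
      case (Some x)
      then obtain y rest where "snd c = y # rest" "fg y = fg x" "al' = map fg rest" using ms by (cases "snd c") auto
      moreover have "y \<in> gG B" "x \<in> gG B" using that(2) tv Some \<open>snd c = y # rest\<close> by (auto simp: valid_def)
      ultimately show ?thesis using fg Some by (auto simp: inj_on_def)
    qed
    then obtain rest where r: "snd c = gopt g @ rest" "al' = map fg rest" by blast
    define d where "d = (q', gopt g' @ rest)"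
    have ne: "gopt g @ rest \<noteq> []" using m(4) t(3) r(2) by (cases g) auto
    have "gmove B c d" unfolding gmove_def d_def
      apply (rule exI[of _ q], rule exI[of _ g], rule exI[of _ g'], rule exI[of _ q'], rule exI[of _ rest])
      using t(1) qc r ne by (auto simp: prod_eq_iff)
    moreover have "d' = enc d" using m(3) t(4,5) r by (simp add: d_def enc_def map_gopt)
    moreover have "valid d" using tv that(2) r by (cases g'; auto simp: valid_def d_def)
    ultimately show ?thesis by blast
  qed
  have R2: "grr (toG A) c' e' w \<Longrightarrow> c' = enc c \<Longrightarrow> valid c \<Longrightarrow> \<exists>e. e' = enc e \<and> valid e \<and> grr B c e w" for c' e' w c
  proof (induction arbitrary: c rule: grr.induct)
    case (grr_refl c') then show ?case using grr.grr_refl[of B c] by blast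
  next
    case (grr_step c' d' e' w)
    obtain d where d: "d' = enc d" "gmove B c d" "valid d" using mv2 grr_step by blast
    obtain e where e: "e' = enc e" "valid e" "grr B d e w" using grr_step.IH[OF d(1) d(3)] by blast
    have "gout (toG A) (fst d') = gout B (fst d)" using d outA by (simp add: toG_def enc_def valid_def)
    then have "grr B c e (gout (toG A) (fst d') # w)" using grr.grr_step[OF d(2) e(3)] by simp
    then show ?case using e(1,2) by blast
  qed
  have "glang (toG A) = glang B"
  proof (intro set_eqI iffI)
    fix x assume "x \<in> glang (toG A)"
    then obtain c' e' w where x: "x = gout (toG A) (fst c') # w" "ginitial (toG A) c'" "gfinal (toG A) e'" "grr (toG A) c' e' w"
      unfolding glang_def by blast
    then obtain q g where qg: "q \<in> ginit B" "g \<in> gG B" "c' = (fq q, [fg g])"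
      by (cases c') (auto simp: ginitial_def toG_def As)
    have vc: "valid (q, [g])" using qg iQ by (auto simp: valid_def)
    have c'e: "c' = enc (q,[g])" using qg by (simp add: enc_def)
    obtain e where e: "e' = enc e" "valid e" "grr B (q,[g]) e w" using R2[OF x(4) c'e vc] by blast
    have "gfinal B e" using x(3) e fq fiQ unfolding gfinal_def toG_def valid_def enc_def
      by (auto simp: As inj_on_def)
    moreover have "x = gout B q # w" using x(1) qg outA iQ by (auto simp: toG_def)
    moreover have "ginitial B (q,[g])" using qg by (simp add: ginitial_def)
    ultimately show "x \<in> glang B" unfolding glang_def using e(3)
      by (intro CollectI exI[of _ "(q,[g])"] exI[of _ e] exI[of _ w]) simp
  next
    fix x assume "x \<in> glang B"
    then obtain c e w where x: "x = gout B (fst c) # w" "ginitial B c" "gfinal B e" "grr B c e w"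
      unfolding glang_def by blast
    have vc: "valid c" using x(2) iQ by (auto simp: ginitial_def valid_def)
    have r: "grr (toG A) (enc c) (enc e) w" "valid e" using R1[OF x(4) vc] by auto
    have "ginitial (toG A) (enc c)" using x(2) by (auto simp: ginitial_def toG_def enc_def As)
    moreover have "gfinal (toG A) (enc e)" using x(3) by (auto simp: gfinal_def toG_def enc_def As)
    moreover have "x = gout (toG A) (fst (enc c)) # w" using x(1) vc outA by (simp add: toG_def enc_def valid_def)
    ultimately show "x \<in> glang (toG A)" unfolding glang_def using r(1)
      by (intro CollectI exI[of _ "enc c"] exI[of _ "enc e"] exI[of _ w]) simp
  qed
  then show ?thesis using wf mpda_lang_glang by metis
qed



definition syms :: "nat set \<Rightarrow> 'a set \<Rightarrow> 'a sym set" where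
  "syms N Sig = Inl ` N \<union> Inr ` Sig"

definition frs :: "nat set \<Rightarrow> 'a set \<Rightarrow> 'a frame set" where
  "frs N Sig = Sym ` syms N Sig \<union> (\<lambda>(C,B). Item C B) ` (N \<times> N)"

definition pwf :: "nat set \<Rightarrow> 'a set \<Rightarrow> nat \<Rightarrow> (nat \<times> 'a sym list) set \<Rightarrow> bool" where
  "pwf N Sig m P \<longleftrightarrow> (\<forall>X al. (X, al) \<in> P \<longrightarrow> X \<in> N \<and> set al \<subseteq> syms N Sig \<and> length al \<le> m)"

lemma U_cases: "U P s t \<Longrightarrow> s = t \<or> (\<exists>B. (B,[s]) \<in> P)"
  by (erule converse_rtranclpE) (auto simp: ustep_def)

lemma U_sig: assumes "pwf N Sig m P" "U P (Inr a) t" "t = Inr a \<longrightarrow> (\<exists>B' be. (B', t#be) \<in> P)"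
  shows "a \<in> Sig"
proof -
  from U_cases[OF assms(2)] show ?thesis
  proof
    assume "Inr a = t"
    then obtain B' be where "(B', Inr a#be) \<in> P" using assms(3) by blast
    then have "Inr a \<in> syms N Sig" using assms(1) unfolding pwf_def by fastforce
    then show ?thesis by (auto simp: syms_def)
  next
    assume "\<exists>B. (B,[Inr a]) \<in> P"
    then have "Inr a \<in> syms N Sig" using assms(1) unfolding pwf_def by fastforce
    then show ?thesis by (auto simp: syms_def)
  qed
qed

lemma tail_clos: "tailok P C B' opt \<Longrightarrow> C \<in> N \<Longrightarrow> B' \<in> N \<Longrightarrow> set opt \<subseteq> frs N Sig \<and> length opt \<le> 1"
  unfolding tailok_def frs_def by auto

lemma msym_clos: assumes pw: "pwf N Sig m P"
  shows "(Sym s, a, u) \<in> msym P \<Longrightarrow> s \<in> syms N Sig \<Longrightarrow> a \<in> Sig \<and> set u \<subseteq> frs N Sig \<and> length u \<le> m"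
proof -
  assume m: "(Sym s, a, u) \<in> msym P" and s: "s \<in> syms N Sig"
  from m consider "s = Inr a" "u = []"
    | C where "s = Inl C" "u = []" "U P (Inr a) (Inl C)"
    | C t B' be opt where "s = Inl C" "u = map Sym be @ opt" "U P (Inr a) t" "(B', t#be) \<in> P" "be \<noteq> []" "tailok P C B' opt"
    unfolding msym_def by blast
  then show ?thesis
  proof cases
    case 1 then show ?thesis using s by (auto simp: syms_def)
  next
    case (2 C) then show ?thesis using U_sig[OF pw 2(3)] by simp
  next
    case (3 C t B' be opt)
    have a: "a \<in> Sig" using U_sig[OF pw 3(3)] 3(4) by blast
    have p: "B' \<in> N" "set (t#be) \<subseteq> syms N Sig" "length (t#be) \<le> m" using pw 3(4) unfolding pwf_def by blast+
    have C: "C \<in> N" using s 3(1) by (auto simp: syms_def)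
    have "set opt \<subseteq> frs N Sig \<and> length opt \<le> 1" using tail_clos[OF 3(6) C p(1)] .
    moreover have "set (map Sym be) \<subseteq> frs N Sig" using p(2) by (auto simp: frs_def)
    ultimately show ?thesis using a 3(2) p(3) by auto
  qed
qed

lemma moves_clos: assumes pw: "pwf N Sig m P"
  shows "X \<in> frs N Sig \<Longrightarrow> (X, a, u) \<in> moves P \<Longrightarrow> a \<in> Sig \<and> set u \<subseteq> frs N Sig \<and> length u < 2*m+1"
proof -
  assume X: "X \<in> frs N Sig" and m: "(X, a, u) \<in> moves P"
  show ?thesis
  proof (cases "(X, a, u) \<in> msym P")
    case True
    then obtain s where s: "X = Sym s" unfolding msym_def by blast
    then have "s \<in> syms N Sig" using X by (auto simp: frs_def)
    then show ?thesis using msym_clos[OF pw] True s by fastforce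
  next
    case False
    then obtain C B t B' s1 rest u1 opt where i: "X = Item C B" "u = u1 @ map Sym rest @ opt" "U P (Inl B) t"
      "(B', t # s1 # rest) \<in> P" "(Sym s1, a, u1) \<in> msym P" "tailok P C B' opt"
      using m unfolding moves_def mitem_def by blast
    have p: "B' \<in> N" "set (t#s1#rest) \<subseteq> syms N Sig" "length (t#s1#rest) \<le> m" using pw i(4) unfolding pwf_def by blast+
    have C: "C \<in> N" using X i(1) by (auto simp: frs_def)
    have u1: "a \<in> Sig \<and> set u1 \<subseteq> frs N Sig \<and> length u1 \<le> m" using msym_clos[OF pw i(5)] p(2) by simp
    have "set opt \<subseteq> frs N Sig \<and> length opt \<le> 1" using tail_clos[OF i(6) C p(1)] .
    moreover have "set (map Sym rest) \<subseteq> frs N Sig" using p(2) by (auto simp: frs_def)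
    ultimately show ?thesis using u1 i(2) p(3) by auto
  qed
qed

lemma cdelta_wf: "(q,g,g',q') \<in> cdelta M Sig Fr K \<Longrightarrow> q \<in> cQ Sig Fr K \<and> q' \<in> cQ Sig Fr K \<and>
   set_option g \<subseteq> cG Fr K \<and> set_option g' \<subseteq> cG Fr K \<and> \<not> (g \<noteq> None \<and> g' \<noteq> None)"
  unfolding cdelta_def Un_iff mem_Collect_eq
  apply (elim disjE exE conjE Pair_inject)
  subgoal by (simp add: cQ_def cG_def)
  subgoal by simp
  subgoal by simp
  done

lemma dir2:
  assumes fS: "finite Sig" and wfG: "wf_cfg Sig G" and len: "\<forall>w \<in> cfg_lang G. 2 \<le> length w"
  shows "\<exists>A. wf_mpda Sig A \<and> mpda_lang A = cfg_lang G"
proof -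
  let ?P = "prods G" let ?N = "nonterms G" let ?S = "start G"
  let ?P' = "epsfree ?P"
  have fP: "finite ?P" and fN: "finite ?N" and SN: "?S \<in> ?N" using wfG by (auto simp: wf_cfg_def)
  obtain m where m: "\<forall>x \<in> (length \<circ> snd) ` ?P. x \<le> m"
    using finite_nat_set_iff_bounded_le fP by (metis finite_imageI)
  have pwP: "pwf ?N Sig m ?P" unfolding pwf_def
  proof (intro allI impI)
    fix X al assume xa: "(X, al) \<in> ?P"
    have "X \<in> ?N \<and> (\<forall>s \<in> set al. case s of Inl Y \<Rightarrow> Y \<in> ?N | Inr a \<Rightarrow> a \<in> Sig)"
      using wfG xa unfolding wf_cfg_def by fast
    moreover have "length al \<le> m" using m xa by force
    ultimately show "X \<in> ?N \<and> set al \<subseteq> syms ?N Sig \<and> length al \<le> m"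
      by (auto simp: syms_def split: sum.splits) (metis image_eqI sum.simps(5) sum.simps(6) sumE)+
  qed
  have pw: "pwf ?N Sig m ?P'" unfolding pwf_def
  proof (intro allI impI)
    fix X al' assume "(X, al') \<in> ?P'"
    then obtain al where "(X, al) \<in> ?P" "del ?P al al'" unfolding epsfree_def by blast
    then show "X \<in> ?N \<and> set al' \<subseteq> syms ?N Sig \<and> length al' \<le> m"
      using pwP del_props[of ?P al al'] unfolding pwf_def by force
  qed
  let ?Fr = "frs ?N Sig" let ?K = "2*m+1" let ?M = "moves ?P'" let ?Sy = "Sym (Inl ?S)"
  let ?B = "cm ?M Sig ?Fr ?K ?Sy"
  have clos: "\<And>X a u. X \<in> ?Fr \<Longrightarrow> (X,a,u) \<in> ?M \<Longrightarrow> a \<in> Sig \<and> set u \<subseteq> ?Fr \<and> length u < ?K"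
    using moves_clos[OF pw] by blast
  have SyF: "?Sy \<in> ?Fr" using SN by (auto simp: frs_def syms_def)
  have ne: "nonempty_rhs ?P'" by (rule nonempty_epsfree)
  have CL: "glang ?B = {a # w | a u w. (?Sy,a,u) \<in> ?M \<and> u \<noteq> [] \<and> (a,u) \<in> cQ Sig ?Fr ?K \<and> amgen ?M u w}"
    by (rule cm_lang) (rule clos)
  have lang: "glang ?B = cfg_lang G"
  proof (intro set_eqI iffI)
    fix x assume "x \<in> glang ?B"
    then obtain a u w where x: "x = a # w" "(?Sy,a,u) \<in> ?M" "amgen ?M u w" unfolding CL by blast
    have "amgen ?M [?Sy] (a # w)" using am_step[of ?Sy a u ?M "[]" w] x by simp
    then have "fsemL ?P' [?Sy] (a # w)" by (rule amgen_sound)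
    then have "gsym ?P (Inl ?S) (a # w)" using eps_sound by simp
    then show "x \<in> cfg_lang G" using x(1) by (simp add: cfg_lang_gsym)
  next
    fix x assume xL: "x \<in> cfg_lang G"
    then have "gsym ?P (Inl ?S) x" "2 \<le> length x" using len by (auto simp: cfg_lang_gsym)
    then have "gsym ?P' (Inl ?S) x" using eps_complete by fastforce
    then have "amgen ?M [?Sy] x" using amgen_complete[OF ne, of "[?Sy]" x] by simp
    then obtain a u w where x: "x = a # w" "(?Sy,a,u) \<in> ?M" "amgen ?M u w"
      by (cases rule: amgen.cases) auto
    have "u \<noteq> []" using x \<open>2 \<le> length x\<close> amgen_Nil by fastforce
    moreover have "(a,u) \<in> cQ Sig ?Fr ?K" using clos[OF SyF x(2)] by (simp add: cQ_def)
    ultimately show "x \<in> glang ?B" unfolding CL using x by blast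
  qed
  have fFr: "finite ?Fr" using fN fS by (simp add: frs_def syms_def)
  have cQe: "cQ Sig ?Fr ?K = Sig \<times> {c. set c \<subseteq> ?Fr \<and> length c \<le> ?K}" by (auto simp: cQ_def)
  have fQ: "finite (gQ ?B)" unfolding cm_simps cQe using fS finite_lists_length_le[OF fFr] by blast
  have fG: "finite (gG ?B)" using finite_lists_length_le[OF fFr] by (simp add: cG_def)
  have tr: "\<And>q g g' q'. (q,g,g',q') \<in> gdelta ?B \<Longrightarrow> q \<in> gQ ?B \<and> q' \<in> gQ ?B \<and> set_option g \<subseteq> gG ?B \<and>
          set_option g' \<subseteq> gG ?B \<and> \<not> (g \<noteq> None \<and> g' \<noteq> None)"
    unfolding cm_simps by (rule cdelta_wf)
  have outS: "\<And>q. q \<in> gQ ?B \<Longrightarrow> gout ?B q \<in> Sig" unfolding cm_simps by (auto simp: cQ_def)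
  have iQ: "ginit ?B \<subseteq> gQ ?B" unfolding cm_simps by blast
  have fiQ: "gfin ?B \<subseteq> gQ ?B" unfolding cm_simps by (auto simp: cQ_def)
  obtain A where "wf_mpda Sig A" "mpda_lang A = glang ?B"
    using rename_exists[of ?B Sig, OF fQ fG tr outS iQ fiQ] by blast
  then show ?thesis using lang by metis
qed


theorem theorem3p2:
  fixes Sig :: "'a set" and L :: "'a list set"
  assumes "finite Sig" and "L \<subseteq> lists Sig"
  shows "(\<exists>A. wf_mpda Sig A \<and> mpda_lang A = L) \<longleftrightarrow>
         (context_free Sig L \<and> (\<forall>w \<in> L. 2 \<le> length w))"
proof
  assume "\<exists>A. wf_mpda Sig A \<and> mpda_lang A = L"
  then obtain A where "wf_mpda Sig A" "mpda_lang A = L" by blast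
  then show "context_free Sig L \<and> (\<forall>w \<in> L. 2 \<le> length w)" using dir1 by blast
next
  assume a: "context_free Sig L \<and> (\<forall>w \<in> L. 2 \<le> length w)"
  then obtain G where "wf_cfg Sig G" "cfg_lang G = L" unfolding context_free_def by blast
  then show "\<exists>A. wf_mpda Sig A \<and> mpda_lang A = L" using dir2[OF assms(1)] a by blast
qed

end
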